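(* For all $X,X'\in\mathcal X$, almost surely \[ K(X,X'):=\lim_{m\to\infty}\big\langle\nabla_\varphi f(X;\varphi^{(0)}),\nabla_\varphi f(X';\varphi^{(0)})\big\rangle=K_c(X,X')+K_u(X,X')+K_w(X,X'), \] where, with $(c,U,\operatorname{vec}(W))$ distributed as $\varphi_1^{(0)}$, $a=a(X;W)$, $a'=a(X';W)$, $M=XJ_s(X^\top Wq_X)X^\top$, $M'=X'J_s(X'^\top Wq_{X'})X'^\top$, \[ K_c=\mathbb E[\sigma(U^\top a)\sigma(U^\top a')],\quad K_u=\mathbb E[\sigma'(U^\top a)\sigma'(U^\top a')\langle a,a'\rangle],\quad K_w=\langle q_X,q_{X'}\rangle\,\mathbb E[\sigma'(U^\top a)\sigma'(U^\top a')U^\top MM'U]. \]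
   Context: $\mathcal{X}=\{X\in\mathbb{R}^{d\times T}:\max_t\|X_t\|_2\le1\}$; each $X$ has a fixed query $q_X\in\mathbb{R}^d$, $\|q_X\|_2\le1$. Softmax $(\sigma_s(z))_t=e^{z_t}/\sum_se^{z_s}$, $J_s(z)=\operatorname{diag}(\sigma_s(z))-\sigma_s(z)\sigma_s(z)^\top$; $a(X;W)=X\sigma_s(X^\top Wq_X)$; $h(X;\theta)=\sigma(U^\top a(X;W))$; $f(X;\varphi)=m^{-1/2}\sum_{i=1}^mc_ih(X;\theta_i)$ with $\varphi_i=(c_i,U_i,\operatorname{vec}(W_i))$; $\sigma$ differentiable with $|\sigma|\le\sigma_0$, $|\sigma'|\le\sigma_1$. For each even $m$, $\varphi^{(0)}$ is the symmetric initialization: $(c_i^{(0)},U_i^{(0)},W_i^{(0)})$, $i\le m/2$, are the first $m/2$ terms of a fixed i.i.d. sequence with $c$ uniform on $\{\pm1\}$, $U\sim\mathcal N(0,I_d)$, $W$ with i.i.d. $\mathcal N(0,1)$ entries (all independent), and $W_{i+m/2}^{(0)}=W_i^{(0)}$, $U_{i+m/2}^{(0)}=U_i^{(0)}$, $c_{i+m/2}^{(0)}=-c_i^{(0)}$; the limit is along even $m$. *)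

theory Defs
  imports "HOL-Analysis.Analysis" "HOL-Probability.Probability"
begin

text \<open>Inputs X are d x T matrices (type real^'t^'d; column t X is the t-th token X_t).\<close>

definition inX :: "real^'t^'d \<Rightarrow> bool" where
  "inX X \<longleftrightarrow> (\<forall>t. norm (column t X) \<le> 1)"

definition softmax :: "real^'t \<Rightarrow> real^'t" where
  "softmax z = (\<chi> t. exp (z$t) / (\<Sum>s\<in>UNIV. exp (z$s)))"

definition softmax_jac :: "real^'t \<Rightarrow> real^'t^'t" where
  "softmax_jac z = (\<chi> i j. (if i = j then softmax z $ i else 0) - softmax z $ i * softmax z $ j)"

definition attn :: "real^'d \<Rightarrow> real^'t^'d \<Rightarrow> real^'d^'d \<Rightarrow> real^'d" where
  "attn q X W = X *v softmax (transpose X *v (W *v q))"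

definition attnM :: "real^'d \<Rightarrow> real^'t^'d \<Rightarrow> real^'d^'d \<Rightarrow> real^'d^'d" where
  "attnM q X W = X ** softmax_jac (transpose X *v (W *v q)) ** transpose X"

text \<open>One neuron parameter theta_i = (c_i, U_i, W_i); a parameter vector phi for width m
  is a function on indices i < m (values at i >= m are irrelevant).\<close>
type_synonym 'd neuron = "real \<times> (real^'d) \<times> (real^'d^'d)"

definition hneur :: "(real \<Rightarrow> real) \<Rightarrow> real^'d \<Rightarrow> real^'t^'d \<Rightarrow> real^'d \<Rightarrow> real^'d^'d \<Rightarrow> real" where
  "hneur \<sigma> q X U W = \<sigma> (U \<bullet> attn q X W)"

definition fnet :: "(real \<Rightarrow> real) \<Rightarrow> nat \<Rightarrow> real^'d \<Rightarrow> real^'t^'d \<Rightarrow> (nat \<Rightarrow> 'd neuron) \<Rightarrow> real" where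
  "fnet \<sigma> m q X \<phi> = (1 / sqrt (real m)) *
      (\<Sum>i<m. fst (\<phi> i) * hneur \<sigma> q X (fst (snd (\<phi> i))) (snd (snd (\<phi> i))))"

type_synonym 'd coord = "unit + 'd + ('d \<times> 'd)"

fun param_get :: "('d::finite) coord \<Rightarrow> 'd neuron \<Rightarrow> real" where
  "param_get (Inl _) (c, U, W) = c"
| "param_get (Inr (Inl j)) (c, U, W) = U $ j"
| "param_get (Inr (Inr (j, k))) (c, U, W) = W $ j $ k"

fun param_set :: "('d::finite) coord \<Rightarrow> real \<Rightarrow> 'd neuron \<Rightarrow> 'd neuron" where
  "param_set (Inl _) x (c, U, W) = (x, U, W)"
| "param_set (Inr (Inl j)) x (c, U, W) = (c, (\<chi> l. if l = j then x else U $ l), W)"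
| "param_set (Inr (Inr (j, k))) x (c, U, W) =
     (c, U, (\<chi> l. \<chi> n. if l = j \<and> n = k then x else W $ l $ n))"

definition partial_f :: "(real \<Rightarrow> real) \<Rightarrow> nat \<Rightarrow> real^'d \<Rightarrow> real^'t^'d \<Rightarrow> (nat \<Rightarrow> 'd neuron)
    \<Rightarrow> nat \<Rightarrow> 'd coord \<Rightarrow> real" where
  "partial_f \<sigma> m q X \<phi> i \<kappa> =
     deriv (\<lambda>x. fnet \<sigma> m q X (\<phi>(i := param_set \<kappa> x (\<phi> i)))) (param_get \<kappa> (\<phi> i))"

definition ntk :: "(real \<Rightarrow> real) \<Rightarrow> nat \<Rightarrow> (real^'t^'d \<Rightarrow> real^'d) \<Rightarrow> real^'t^'d \<Rightarrow> real^'t^'d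
    \<Rightarrow> (nat \<Rightarrow> 'd neuron) \<Rightarrow> real" where
  "ntk \<sigma> m q X X' \<phi> =
     (\<Sum>i<m. \<Sum>\<kappa>\<in>UNIV. partial_f \<sigma> m (q X) X \<phi> i \<kappa> * partial_f \<sigma> m (q X') X' \<phi> i \<kappa>)"

definition sym_init :: "nat \<Rightarrow> (nat \<Rightarrow> real) \<Rightarrow> (nat \<Rightarrow> real^'d) \<Rightarrow> (nat \<Rightarrow> real^'d^'d)
    \<Rightarrow> nat \<Rightarrow> 'd neuron" where
  "sym_init m c U W i =
     (if i < m div 2 then (c i, U i, W i)
      else (- c (i - m div 2), U (i - m div 2), W (i - m div 2)))"

end

theory Submission
  imports Defs "HOL-Library.Discrete_Functions" "HOL-Real_Asymp.Real_Asymp"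
begin

lemma (in prob_space) var_sum_bound:
  fixes Y :: "nat \<Rightarrow> 'a \<Rightarrow> real"
  assumes meas: "\<And>i. Y i \<in> borel_measurable M"
    and ind: "\<And>i j. i \<noteq> j \<Longrightarrow> indep_var borel (Y i) borel (Y j)"
    and sq: "\<And>i. integrable M (\<lambda>\<omega>. (Y i \<omega>)^2)"
    and mean: "\<And>i. expectation (Y i) = \<mu>"
    and var: "\<And>i. expectation (\<lambda>\<omega>. (Y i \<omega> - \<mu>)^2) \<le> C"
  shows "integrable M (\<lambda>\<omega>. (\<Sum>i<n. (Y i \<omega> - \<mu>))^2) \<and>
         expectation (\<lambda>\<omega>. (\<Sum>i<n. (Y i \<omega> - \<mu>))^2) \<le> n * C"
proof -
  define Z where "Z i \<omega> = Y i \<omega> - \<mu>" for i \<omega>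
  have intY: "integrable M (Y i)" for i
    by (rule square_integrable_imp_integrable[OF meas sq])
  have intZ: "integrable M (Z i)" for i
    unfolding Z_def using intY by auto
  have EZ: "expectation (Z i) = 0" for i
    unfolding Z_def using intY mean by (simp add: prob_space)
  have indZ: "indep_var borel (Z i) borel (Z j)" if "i \<noteq> j" for i j
  proof -
    have "indep_var borel ((\<lambda>x. x - \<mu>) \<circ> Y i) borel ((\<lambda>x. x - \<mu>) \<circ> Y j)"
      by (rule indep_var_compose[OF ind[OF that]]) auto
    then show ?thesis unfolding Z_def comp_def .
  qed
  have intZZ: "integrable M (\<lambda>\<omega>. Z i \<omega> * Z j \<omega>)" for i j
  proof (cases "i = j")
    case True
    have "integrable M (\<lambda>\<omega>. (Y i \<omega>)^2 - 2 * \<mu> * Y i \<omega> + \<mu>^2)"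
      using sq intY by auto
    moreover have "(\<lambda>\<omega>. (Y i \<omega>)^2 - 2 * \<mu> * Y i \<omega> + \<mu>^2) = (\<lambda>\<omega>. Z i \<omega> * Z j \<omega>)"
      using True by (auto simp: Z_def power2_eq_square algebra_simps)
    ultimately show ?thesis by simp
  next
    case False
    then show ?thesis using indep_var_integrable[OF indZ[OF False] intZ intZ] by simp
  qed
  have sqexp: "(\<Sum>i<n. Z i \<omega>)^2 = (\<Sum>i<n. \<Sum>j<n. Z i \<omega> * Z j \<omega>)" for \<omega>
    by (simp add: power2_eq_square sum_product)
  have int: "integrable M (\<lambda>\<omega>. (\<Sum>i<n. Z i \<omega>)^2)"
    unfolding sqexp using intZZ by auto
  have "expectation (\<lambda>\<omega>. (\<Sum>i<n. Z i \<omega>)^2) = (\<Sum>i<n. \<Sum>j<n. expectation (\<lambda>\<omega>. Z i \<omega> * Z j \<omega>))"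
    unfolding sqexp using intZZ by (simp add: integral_sum)
  also have "\<dots> = (\<Sum>i<n. expectation (\<lambda>\<omega>. Z i \<omega> * Z i \<omega>))"
  proof (rule sum.cong[OF refl])
    fix i assume i: "i \<in> {..<n}"
    have "(\<Sum>j<n. expectation (\<lambda>\<omega>. Z i \<omega> * Z j \<omega>)) =
          (\<Sum>j\<in>{i}. expectation (\<lambda>\<omega>. Z i \<omega> * Z j \<omega>))"
    proof (rule sum.mono_neutral_right)
      show "\<forall>j\<in>{..<n} - {i}. expectation (\<lambda>\<omega>. Z i \<omega> * Z j \<omega>) = 0"
        using indep_var_lebesgue_integral[OF indZ intZ intZ] EZ by auto
    qed (use i in auto)
    then show "(\<Sum>j<n. expectation (\<lambda>\<omega>. Z i \<omega> * Z j \<omega>)) = expectation (\<lambda>\<omega>. Z i \<omega> * Z i \<omega>)"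
      by simp
  qed
  also have "\<dots> \<le> (\<Sum>i<n. C)"
    by (rule sum_mono) (use var in \<open>auto simp: Z_def power2_eq_square\<close>)
  also have "\<dots> = n * C" by simp
  finally show ?thesis using int unfolding Z_def by simp
qed

lemma summ_sq: "summable (\<lambda>k::nat. C / (real (Suc k))^2)"
proof -
  have "summable (\<lambda>k::nat. 1 / (real (Suc k))^2)"
    using inverse_power_summable[of 2] by (subst summable_Suc_iff) (simp add: inverse_eq_divide)
  then show ?thesis using summable_mult[of _ C] by (simp add: divide_inverse)
qed

lemma (in prob_space) slln_squares:
  fixes Y :: "nat \<Rightarrow> 'a \<Rightarrow> real"
  assumes meas: "\<And>i. Y i \<in> borel_measurable M"
    and ind: "\<And>i j. i \<noteq> j \<Longrightarrow> indep_var borel (Y i) borel (Y j)"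
    and sq: "\<And>i. integrable M (\<lambda>\<omega>. (Y i \<omega>)^2)"
    and mean: "\<And>i. expectation (Y i) = \<mu>"
    and var: "\<And>i. expectation (\<lambda>\<omega>. (Y i \<omega> - \<mu>)^2) \<le> C"
  shows "AE \<omega> in M. (\<lambda>k. (\<Sum>i<(Suc k)^2. Y i \<omega>) / (Suc k)^2) \<longlonglongrightarrow> \<mu>"
proof -
  define N where "N k = (Suc k)^2" for k
  define f where "f k \<omega> = ((\<Sum>i<N k. (Y i \<omega> - \<mu>)) / N k)^2" for k \<omega>
  have "0 \<le> expectation (\<lambda>\<omega>. (Y 0 \<omega> - \<mu>)^2)" by (rule integral_nonneg_AE) auto
  then have C0: "0 \<le> C" using var[of 0] by linarith
  have Npos: "0 < real (N k)" for k by (simp add: N_def)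
  have fmeas: "f k \<in> borel_measurable M" for k unfolding f_def using meas by measurable
  have fint: "integrable M (f k)" and fE: "expectation (f k) \<le> C / (real (Suc k))^2" for k
  proof -
    have vb: "integrable M (\<lambda>\<omega>. (\<Sum>i<N k. (Y i \<omega> - \<mu>))^2) \<and>
         expectation (\<lambda>\<omega>. (\<Sum>i<N k. (Y i \<omega> - \<mu>))^2) \<le> N k * C"
      by (rule var_sum_bound[OF meas ind sq mean var])
    have feq: "f k = (\<lambda>\<omega>. (\<Sum>i<N k. (Y i \<omega> - \<mu>))^2 / (real (N k))^2)"
      by (auto simp: f_def power_divide)
    show "integrable M (f k)" unfolding feq using vb by auto
    have "expectation (f k) = expectation (\<lambda>\<omega>. (\<Sum>i<N k. (Y i \<omega> - \<mu>))^2) / (real (N k))^2"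
      unfolding feq by simp
    also have "\<dots> \<le> N k * C / (real (N k))^2"
      using vb by (intro divide_right_mono) auto
    also have "\<dots> = C / N k" using Npos by (simp add: power2_eq_square)
    also have "\<dots> \<le> C / (real (Suc k))^2" by (simp add: N_def)
    finally show "expectation (f k) \<le> C / (real (Suc k))^2" .
  qed
  have fnn: "0 \<le> f k \<omega>" for k \<omega> by (simp add: f_def)
  have "(\<integral>\<^sup>+\<omega>. (\<Sum>k. ennreal (f k \<omega>)) \<partial>M) = (\<Sum>k. \<integral>\<^sup>+\<omega>. ennreal (f k \<omega>) \<partial>M)"
    by (rule nn_integral_suminf) (use fmeas in auto)
  also have "\<dots> = (\<Sum>k. ennreal (expectation (f k)))"
    by (intro suminf_cong nn_integral_eq_integral) (use fint fnn in auto)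
  also have "\<dots> \<le> (\<Sum>k. ennreal (C / (real (Suc k))^2))"
    by (intro suminf_le) (use fE in \<open>auto intro: ennreal_leI\<close>)
  also have "\<dots> = ennreal (\<Sum>k. C / (real (Suc k))^2)"
    using summ_sq C0 by (intro suminf_ennreal2) auto
  also have "\<dots> < \<infinity>" by simp
  finally have fin: "(\<integral>\<^sup>+\<omega>. (\<Sum>k. ennreal (f k \<omega>)) \<partial>M) \<noteq> \<infinity>" by simp
  have "AE \<omega> in M. (\<Sum>k. ennreal (f k \<omega>)) \<noteq> \<infinity>"
    by (rule nn_integral_PInf_AE[OF _ fin]) (use fmeas in measurable)
  then show ?thesis
  proof (rule AE_mp, intro AE_I2 impI)
    fix \<omega> assume "(\<Sum>k. ennreal (f k \<omega>)) \<noteq> \<infinity>"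
    then have "summable (\<lambda>k. f k \<omega>)"
      using fnn by (intro summable_suminf_not_top) auto
    then have "(\<lambda>k. f k \<omega>) \<longlonglongrightarrow> 0" by (rule summable_LIMSEQ_zero)
    then have "(\<lambda>k. sqrt (f k \<omega>)) \<longlonglongrightarrow> 0"
      using tendsto_real_sqrt by fastforce
    then have "(\<lambda>k. \<bar>(\<Sum>i<N k. (Y i \<omega> - \<mu>)) / N k\<bar>) \<longlonglongrightarrow> 0"
      by (simp only: f_def real_sqrt_abs)
    then have "(\<lambda>k. (\<Sum>i<N k. (Y i \<omega> - \<mu>)) / N k) \<longlonglongrightarrow> 0"
      by (simp only: tendsto_rabs_zero_iff)
    then have "(\<lambda>k. \<mu> + (\<Sum>i<N k. (Y i \<omega> - \<mu>)) / N k) \<longlonglongrightarrow> \<mu> + 0"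
      by (intro tendsto_add) auto
    moreover have "\<mu> + (\<Sum>i<N k. (Y i \<omega> - \<mu>)) / N k = (\<Sum>i<(Suc k)^2. Y i \<omega>) / (Suc k)^2" for k
      using Npos[of k] by (simp add: sum_subtractf N_def field_simps)
    ultimately show "(\<lambda>k. (\<Sum>i<(Suc k)^2. Y i \<omega>) / (Suc k)^2) \<longlonglongrightarrow> \<mu>" by simp
  qed
qed

lemma sandwich_det:
  fixes y :: "nat \<Rightarrow> real"
  assumes nn: "\<And>i. 0 \<le> y i"
    and T: "(\<lambda>k. (\<Sum>i<(Suc k)^2. y i) / (Suc k)^2) \<longlonglongrightarrow> \<mu>"
  shows "(\<lambda>n. (\<Sum>i<n. y i) / n) \<longlonglongrightarrow> \<mu>"
proof -
  define S where "S n = (\<Sum>i<n. y i)" for n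
  define Tk where "Tk k = S ((Suc k)^2) / (Suc k)^2" for k
  have Snn: "0 \<le> S n" for n unfolding S_def using nn by (simp add: sum_nonneg)
  have Smono: "S m \<le> S n" if "m \<le> n" for m n
    unfolding S_def using that nn by (intro sum_mono2) auto
  have Tk: "Tk \<longlonglongrightarrow> \<mu>" using T unfolding Tk_def S_def .
  define Up where "Up k = Tk (Suc k) * ((real (Suc (Suc k)))^2 / (real (Suc k))^2)" for k
  define Lo where "Lo k = Tk k * ((real (Suc k))^2 / (real (Suc (Suc k)))^2)" for k
  have r1: "(\<lambda>k. (real (Suc (Suc k)))^2 / (real (Suc k))^2) \<longlonglongrightarrow> 1"
    by real_asymp
  have r2: "(\<lambda>k. (real (Suc k))^2 / (real (Suc (Suc k)))^2) \<longlonglongrightarrow> 1"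
    by real_asymp
  have Up: "Up \<longlonglongrightarrow> \<mu>"
    unfolding Up_def using tendsto_mult[OF LIMSEQ_Suc[OF Tk] r1] by simp
  have Lo: "Lo \<longlonglongrightarrow> \<mu>"
    unfolding Lo_def using tendsto_mult[OF Tk r2] by simp
  define kk where "kk n = floor_sqrt n - 1" for n
  have kk: "filterlim kk at_top sequentially"
  proof (subst filterlim_at_top, intro allI)
    fix K
    show "eventually (\<lambda>n. K \<le> kk n) sequentially"
    proof (rule eventually_sequentiallyI[of "(Suc K)^2"])
      fix n assume "(Suc K)^2 \<le> n"
      then have "Suc K \<le> floor_sqrt n" by (rule le_floor_sqrtI)
      then show "K \<le> kk n" by (simp add: kk_def)
    qed
  qed
  have Upk: "(\<lambda>n. Up (kk n)) \<longlonglongrightarrow> \<mu>" by (rule filterlim_compose[OF Up kk])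
  have Lok: "(\<lambda>n. Lo (kk n)) \<longlonglongrightarrow> \<mu>" by (rule filterlim_compose[OF Lo kk])
  have bounds: "Lo (kk n) \<le> S n / n \<and> S n / n \<le> Up (kk n)" if n1: "1 \<le> n" for n
  proof -
    define r where "r = floor_sqrt n"
    have r1: "1 \<le> r" unfolding r_def using n1 by (simp add: le_floor_sqrtI)
    have Sk: "Suc (kk n) = r" unfolding kk_def r_def using r1 r_def by simp
    have rn: "r^2 \<le> n" unfolding r_def by simp
    have nr: "n < (Suc r)^2" unfolding r_def by (rule Suc_floor_sqrt_power2_gt)
    have rpos: "0 < real r" using r1 by simp
    have rn': "real r ^ 2 \<le> real n" using rn by (metis of_nat_le_iff of_nat_power)
    have nr': "real n \<le> real (Suc r) ^ 2" using nr by (metis less_imp_le of_nat_le_iff of_nat_power)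
    have npos: "0 < real n" using n1 by simp
    have "Up (kk n) = S ((Suc r)^2) / (real r)^2"
      unfolding Up_def Tk_def using Sk rpos by (simp add: field_simps)
    moreover have "Lo (kk n) = S (r^2) / (real (Suc r))^2"
      unfolding Lo_def Tk_def using Sk rpos by (simp add: field_simps)
    moreover have "S n / n \<le> S ((Suc r)^2) / (real r)^2"
    proof -
      have "S n / n \<le> S ((Suc r)^2) / n"
        using Smono[of n "(Suc r)^2"] nr npos by (simp add: divide_right_mono)
      also have "\<dots> \<le> S ((Suc r)^2) / (real r)^2"
        using rn' rpos npos Snn by (intro divide_left_mono) auto
      finally show ?thesis .
    qed
    moreover have "S (r^2) / (real (Suc r))^2 \<le> S n / n"
    proof -
      have "S (r^2) / (real (Suc r))^2 \<le> S (r^2) / n"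
        using nr' npos Snn by (intro divide_left_mono) auto
      also have "\<dots> \<le> S n / n"
        using Smono[OF rn] npos by (simp add: divide_right_mono)
      finally show ?thesis .
    qed
    ultimately show ?thesis by simp
  qed
  have "(\<lambda>n. S n / n) \<longlonglongrightarrow> \<mu>"
  proof (rule tendsto_sandwich[OF _ _ Lok Upk])
    show "\<forall>\<^sub>F n in sequentially. Lo (kk n) \<le> S n / real n"
      using bounds by (intro eventually_sequentiallyI[of 1]) auto
    show "\<forall>\<^sub>F n in sequentially. S n / real n \<le> Up (kk n)"
      using bounds by (intro eventually_sequentiallyI[of 1]) auto
  qed
  then show ?thesis by (simp add: S_def)
qed

lemma (in prob_space) slln_nonneg:
  fixes Y :: "nat \<Rightarrow> 'a \<Rightarrow> real"
  assumes meas: "\<And>i. Y i \<in> borel_measurable M"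
    and ind: "\<And>i j. i \<noteq> j \<Longrightarrow> indep_var borel (Y i) borel (Y j)"
    and sq: "\<And>i. integrable M (\<lambda>\<omega>. (Y i \<omega>)^2)"
    and mean: "\<And>i. expectation (Y i) = \<mu>"
    and var: "\<And>i. expectation (\<lambda>\<omega>. (Y i \<omega> - \<mu>)^2) \<le> C"
    and nn: "\<And>i \<omega>. 0 \<le> Y i \<omega>"
  shows "AE \<omega> in M. (\<lambda>n. (\<Sum>i<n. Y i \<omega>) / n) \<longlonglongrightarrow> \<mu>"
  using slln_squares[OF meas ind sq mean var]
  by (rule AE_mp) (auto intro!: AE_I2 sandwich_det nn)

lemma (in prob_space) transfer_distr:
  fixes Y :: "nat \<Rightarrow> 'a \<Rightarrow> real"
  assumes meas: "\<And>i. Y i \<in> borel_measurable M"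
    and dist: "\<And>i. distr M borel (Y i) = distr M borel (Y 0)"
    and g: "g \<in> borel_measurable borel" and int: "integrable M (\<lambda>\<omega>. g (Y 0 \<omega>) :: real)"
  shows "integrable M (\<lambda>\<omega>. g (Y i \<omega>)) \<and> expectation (\<lambda>\<omega>. g (Y i \<omega>)) = expectation (\<lambda>\<omega>. g (Y 0 \<omega>))"
proof -
  have "integrable (distr M borel (Y 0)) g" using int by (subst integrable_distr_eq) (use meas g in auto)
  then have "integrable (distr M borel (Y i)) g" by (simp only: dist[of i])
  then have I: "integrable M (\<lambda>\<omega>. g (Y i \<omega>))" by (subst (asm) integrable_distr_eq) (use meas g in auto)
  have "expectation (\<lambda>\<omega>. g (Y i \<omega>)) = integral\<^sup>L (distr M borel (Y i)) g"
    by (rule integral_distr[symmetric]) (use meas g in auto)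
  also have "\<dots> = integral\<^sup>L (distr M borel (Y 0)) g" by (simp only: dist[of i])
  also have "\<dots> = expectation (\<lambda>\<omega>. g (Y 0 \<omega>))"
    by (rule integral_distr) (use meas g in auto)
  finally show ?thesis using I by simp
qed

lemma (in prob_space) slln_nonneg_id:
  fixes Y :: "nat \<Rightarrow> 'a \<Rightarrow> real"
  assumes meas: "\<And>i. Y i \<in> borel_measurable M"
    and ind: "\<And>i j. i \<noteq> j \<Longrightarrow> indep_var borel (Y i) borel (Y j)"
    and dist: "\<And>i. distr M borel (Y i) = distr M borel (Y 0)"
    and sq: "integrable M (\<lambda>\<omega>. (Y 0 \<omega>)^2)"
    and nn: "\<And>i \<omega>. 0 \<le> Y i \<omega>"
  shows "AE \<omega> in M. (\<lambda>n. (\<Sum>i<n. Y i \<omega>) / n) \<longlonglongrightarrow> expectation (Y 0)"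
proof -
  let ?\<mu> = "expectation (Y 0)"
  have int0: "integrable M (Y 0)" by (rule square_integrable_imp_integrable[OF meas sq])
  have int0v: "integrable M (\<lambda>\<omega>. (Y 0 \<omega> - ?\<mu>)^2)"
  proof -
    have "integrable M (\<lambda>\<omega>. (Y 0 \<omega>)^2 - 2 * ?\<mu> * Y 0 \<omega> + ?\<mu>^2)"
      using sq int0 by auto
    moreover have "(\<lambda>\<omega>. (Y 0 \<omega>)^2 - 2 * ?\<mu> * Y 0 \<omega> + ?\<mu>^2) = (\<lambda>\<omega>. (Y 0 \<omega> - ?\<mu>)^2)"
      by (auto simp: power2_eq_square algebra_simps)
    ultimately show ?thesis by simp
  qed
  have sqi: "integrable M (\<lambda>\<omega>. (Y i \<omega>)^2)" for i
    using transfer_distr[where Y=Y and g="\<lambda>x. x^2" and i=i, OF meas dist _ sq] by simp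
  have mean: "expectation (Y i) = ?\<mu>" for i
    using transfer_distr[where Y=Y and g="\<lambda>x. x" and i=i, OF meas dist _ int0] by simp
  have vareq: "expectation (\<lambda>\<omega>. (Y i \<omega> - ?\<mu>)^2) = expectation (\<lambda>\<omega>. (Y 0 \<omega> - ?\<mu>)^2)" for i
    using transfer_distr[where Y=Y and g="\<lambda>x. (x - ?\<mu>)^2" and i=i, OF meas dist _ int0v] by simp
  have var: "expectation (\<lambda>\<omega>. (Y i \<omega> - ?\<mu>)^2) \<le> expectation (\<lambda>\<omega>. (Y 0 \<omega> - ?\<mu>)^2)" for i
    using vareq[of i] by (rule eq_refl)
  show ?thesis by (rule slln_nonneg[OF meas ind sqi mean var nn])
qed

lemma (in prob_space) slln:
  fixes Y :: "nat \<Rightarrow> 'a \<Rightarrow> real"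
  assumes meas: "\<And>i. Y i \<in> borel_measurable M"
    and ind: "\<And>i j. i \<noteq> j \<Longrightarrow> indep_var borel (Y i) borel (Y j)"
    and dist: "\<And>i. distr M borel (Y i) = distr M borel (Y 0)"
    and sq: "integrable M (\<lambda>\<omega>. (Y 0 \<omega>)^2)"
  shows "AE \<omega> in M. (\<lambda>n. (\<Sum>i<n. Y i \<omega>) / n) \<longlonglongrightarrow> expectation (Y 0)"
proof -
  have part: "AE \<omega> in M. (\<lambda>n. (\<Sum>i<n. g (Y i \<omega>)) / n) \<longlonglongrightarrow> expectation (\<lambda>\<omega>. g (Y 0 \<omega>))
      \<and> integrable M (\<lambda>\<omega>. g (Y 0 \<omega>))"
    if g: "g \<in> borel_measurable borel" and gnn: "\<And>x. 0 \<le> g x" and gb: "\<And>x. \<bar>g x\<bar> \<le> \<bar>x\<bar>" for g :: "real \<Rightarrow> real"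
  proof -
    have gm: "(\<lambda>\<omega>. g (Y i \<omega>)) \<in> borel_measurable M" for i using g meas by measurable
    have sqg: "integrable M (\<lambda>\<omega>. (g (Y 0 \<omega>))^2)"
    proof (rule Bochner_Integration.integrable_bound[OF sq])
      show "(\<lambda>\<omega>. (g (Y 0 \<omega>))^2) \<in> borel_measurable M" using gm by measurable
      show "AE \<omega> in M. norm ((g (Y 0 \<omega>))^2) \<le> norm ((Y 0 \<omega>)^2)"
        using gb by (auto intro!: AE_I2 simp: abs_le_square_iff)
    qed
    have indg: "indep_var borel (\<lambda>\<omega>. g (Y i \<omega>)) borel (\<lambda>\<omega>. g (Y j \<omega>))" if "i \<noteq> j" for i j
      using indep_var_compose[OF ind[OF that] g g] by (simp add: comp_def)
    have distg: "distr M borel (\<lambda>\<omega>. g (Y i \<omega>)) = distr M borel (\<lambda>\<omega>. g (Y 0 \<omega>))" for i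
    proof -
      have "distr M borel (\<lambda>\<omega>. g (Y i \<omega>)) = distr (distr M borel (Y i)) borel g"
        using distr_distr[OF g meas[of i]] by (simp add: comp_def)
      also have "\<dots> = distr (distr M borel (Y 0)) borel g" by (simp only: dist[of i])
      also have "\<dots> = distr M borel (\<lambda>\<omega>. g (Y 0 \<omega>))"
        using distr_distr[OF g meas[of 0]] by (simp add: comp_def)
      finally show ?thesis .
    qed
    have "AE \<omega> in M. (\<lambda>n. (\<Sum>i<n. g (Y i \<omega>)) / n) \<longlonglongrightarrow> expectation (\<lambda>\<omega>. g (Y 0 \<omega>))"
      by (rule slln_nonneg_id[where Y="\<lambda>i \<omega>. g (Y i \<omega>)", OF gm indg distg sqg gnn])
    moreover have "integrable M (\<lambda>\<omega>. g (Y 0 \<omega>))"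
      by (rule square_integrable_imp_integrable[OF gm sqg])
    ultimately show ?thesis by simp
  qed
  have P: "AE \<omega> in M. (\<lambda>n. (\<Sum>i<n. max (Y i \<omega>) 0) / n) \<longlonglongrightarrow> expectation (\<lambda>\<omega>. max (Y 0 \<omega>) 0)
      \<and> integrable M (\<lambda>\<omega>. max (Y 0 \<omega>) 0)"
    by (rule part) auto
  have N: "AE \<omega> in M. (\<lambda>n. (\<Sum>i<n. max (- Y i \<omega>) 0) / n) \<longlonglongrightarrow> expectation (\<lambda>\<omega>. max (- Y 0 \<omega>) 0)
      \<and> integrable M (\<lambda>\<omega>. max (- Y 0 \<omega>) 0)"
    using part[of "\<lambda>x. max (-x) 0"] by auto
  have dec: "x = max x 0 - max (-x) 0" for x :: real by auto
  from P N show ?thesis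
  proof (eventually_elim)
    case (elim \<omega>)
    have "(\<lambda>n. (\<Sum>i<n. max (Y i \<omega>) 0) / n - (\<Sum>i<n. max (- Y i \<omega>) 0) / n) \<longlonglongrightarrow>
           expectation (\<lambda>\<omega>. max (Y 0 \<omega>) 0) - expectation (\<lambda>\<omega>. max (- Y 0 \<omega>) 0)"
      using elim by (intro tendsto_diff) auto
    moreover have "(\<Sum>i<n. max (Y i \<omega>) 0) / n - (\<Sum>i<n. max (- Y i \<omega>) 0) / n = (\<Sum>i<n. Y i \<omega>) / n" for n
      by (simp add: diff_divide_distrib[symmetric] sum_subtractf[symmetric] dec[symmetric])
    moreover have "expectation (\<lambda>\<omega>. max (Y 0 \<omega>) 0) - expectation (\<lambda>\<omega>. max (- Y 0 \<omega>) 0) = expectation (Y 0)"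
      using P N elim by (subst Bochner_Integration.integral_diff[symmetric]) (auto simp flip: dec)
    ultimately show ?case by simp
  qed
qed

lemma softmax_nth: "softmax z $ t = exp (z$t) / (\<Sum>s\<in>UNIV. exp (z$s))"
  by (simp add: softmax_def)

lemma sumexp_pos: "0 < (\<Sum>s\<in>UNIV. exp ((z::real^'t)$s))"
  by (intro sum_pos) auto

lemma jac_mult: "(softmax_jac z *v v) $ t = softmax z $ t * v $ t - softmax z $ t * (\<Sum>s\<in>UNIV. softmax z $ s * v $ s)"
proof -
  have "(softmax_jac z *v v) $ t = (\<Sum>s\<in>UNIV. ((if t = s then softmax z $ t else 0) - softmax z $ t * softmax z $ s) * v $ s)"
    by (simp add: softmax_jac_def matrix_vector_mult_def)
  also have "\<dots> = (\<Sum>s\<in>UNIV. (if t = s then softmax z $ t * v $ s else 0)) - (\<Sum>s\<in>UNIV. softmax z $ t * (softmax z $ s * v $ s))"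
    by (subst sum_subtractf[symmetric]) (rule sum.cong, auto simp: left_diff_distrib)
  also have "\<dots> = softmax z $ t * v $ t - softmax z $ t * (\<Sum>s\<in>UNIV. softmax z $ s * v $ s)"
    by (simp add: sum_distrib_left)
  finally show ?thesis .
qed

lemma softmax_deriv:
  fixes z v :: "real^'t"
  shows "((\<lambda>x. softmax (z + (c * (x - x0)) *s v) $ t) has_real_derivative c * (softmax_jac z *v v) $ t) (at x0)"
proof -
  define S where "S = (\<Sum>s\<in>UNIV. exp (z$s))"
  have S: "0 < S" unfolding S_def by (rule sumexp_pos)
  have eq: "softmax (z + (c * (x - x0)) *s v) $ t =
       exp (z$t + c * (x - x0) * v$t) / (\<Sum>s\<in>UNIV. exp (z$s + c * (x - x0) * v$s))" for x
    by (simp add: softmax_nth)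
  have "((\<lambda>x. exp (z$t + c * (x - x0) * v$t) / (\<Sum>s\<in>UNIV. exp (z$s + c * (x - x0) * v$s)))
     has_real_derivative
      ((exp (z$t) * (c * v$t)) * S - exp (z$t) * (\<Sum>s\<in>UNIV. exp (z$s) * (c * v$s))) / (S * S)) (at x0)"
    by (auto intro!: derivative_eq_intros simp: S_def[symmetric] S less_imp_neq[OF S, symmetric])
  moreover have "((exp (z$t) * (c * v$t)) * S - exp (z$t) * (\<Sum>s\<in>UNIV. exp (z$s) * (c * v$s))) / (S * S)
      = c * (softmax_jac z *v v) $ t"
    unfolding jac_mult softmax_nth S_def[symmetric] using S
    by (simp add: field_simps sum_distrib_left sum_divide_distrib)
  ultimately show ?thesis unfolding eq by simp
qed

fun pd :: "(real \<Rightarrow> real) \<Rightarrow> real^'d \<Rightarrow> real^'t^'d \<Rightarrow> ('d::finite) coord \<Rightarrow> 'd neuron \<Rightarrow> real" where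
  "pd \<sigma> q X (Inl _) (c, U, W) = \<sigma> (U \<bullet> attn q X W)"
| "pd \<sigma> q X (Inr (Inl j)) (c, U, W) = c * deriv \<sigma> (U \<bullet> attn q X W) * attn q X W $ j"
| "pd \<sigma> q X (Inr (Inr (j, k))) (c, U, W) =
     c * deriv \<sigma> (U \<bullet> attn q X W) * (U \<bullet> (attnM q X W *v axis j 1)) * q $ k"

lemma inner_upd: "(\<chi> l. if l = j then x else U$l) \<bullet> (a::real^'d) = U \<bullet> a + (x - U$j) * a$j"
proof -
  have e: "(\<chi> l. if l = j then x else U$l) = U + (x - U$j) *\<^sub>R axis j 1"
    by (simp add: vec_eq_iff axis_def)
  show ?thesis by (subst e) (simp add: inner_add_left inner_axis' algebra_simps)
qed

lemma Wupd_mult: "(\<chi> l n. if l = j \<and> n = k then x else W$l$n) *v (q::real^'d) =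
    W *v q + ((x - W$j$k) * q$k) *s axis j 1"
proof (rule iffD2[OF vec_eq_iff], rule allI)
  fix l
  have "(\<Sum>n\<in>UNIV. (if l = j \<and> n = k then x else W$l$n) * q$n) =
        (\<Sum>n\<in>UNIV. W$l$n * q$n + (if n = k then (if l = j then (x - W$j$k) * q$n else 0) else 0))"
    by (rule sum.cong) (auto simp: algebra_simps)
  also have "\<dots> = (\<Sum>n\<in>UNIV. W$l$n * q$n) + (if l = j then (x - W$j$k) * q$k else 0)"
    by (simp add: sum.distrib)
  finally show "((\<chi> l n. if l = j \<and> n = k then x else W$l$n) *v q) $ l =
      (W *v q + ((x - W$j$k) * q$k) *s axis j 1) $ l"
    by (simp add: matrix_vector_mult_def axis_def)
qed

lemma inner_Xmult: "(U::real^'d) \<bullet> (X *v (p::real^'t)) = (\<Sum>t\<in>UNIV. (transpose X *v U)$t * p$t)"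
proof -
  have "U \<bullet> (X *v p) = (\<Sum>a\<in>UNIV. \<Sum>t\<in>UNIV. U$a * X$a$t * p$t)"
    by (simp add: inner_vec_def matrix_vector_mult_def sum_distrib_left mult.assoc)
  also have "\<dots> = (\<Sum>t\<in>UNIV. \<Sum>a\<in>UNIV. U$a * X$a$t * p$t)"
    by (rule sum.swap)
  also have "\<dots> = (\<Sum>t\<in>UNIV. (transpose X *v U)$t * p$t)"
    by (simp add: matrix_vector_mult_def transpose_def sum_distrib_right sum_distrib_left mult.commute mult.left_commute)
  finally show ?thesis .
qed

lemma attn_Wupd:
  "attn q X (\<chi> l n. if l = j \<and> n = k then x else W$l$n) =
   X *v softmax (transpose X *v (W *v q) + (q$k * (x - W$j$k)) *s (transpose X *v axis j 1))"
  by (simp add: attn_def Wupd_mult matrix_vector_right_distrib vector_scalar_commute mult.commute)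

lemma attnM_axis: "U \<bullet> (attnM q X W *v axis j 1) =
   (\<Sum>t\<in>UNIV. (transpose X *v U)$t * (softmax_jac (transpose X *v (W *v q)) *v (transpose X *v axis j 1))$t)"
  by (simp add: attnM_def matrix_vector_mul_assoc[symmetric] inner_Xmult)

lemma neuron_deriv:
  assumes dif: "\<And>x. \<sigma> differentiable (at x)"
  shows "((\<lambda>x. fst (param_set \<kappa> x \<theta>) * hneur \<sigma> q X (fst (snd (param_set \<kappa> x \<theta>))) (snd (snd (param_set \<kappa> x \<theta>))))
      has_real_derivative pd \<sigma> q X \<kappa> \<theta>) (at (param_get \<kappa> \<theta>))"
proof -
  obtain c U W where \<theta>: "\<theta> = (c, U, W)" by (cases \<theta>) auto
  have d\<sigma>: "(\<sigma> has_real_derivative deriv \<sigma> y) (at y)" for y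
    using dif by (simp add: DERIV_deriv_iff_real_differentiable)
  show ?thesis
  proof (cases \<kappa>)
    case (Inl u)
    show ?thesis using \<theta> Inl by (auto simp: hneur_def intro!: derivative_eq_intros)
  next
    case (Inr r)
    show ?thesis
    proof (cases r)
      case (Inl j)
      define a where "a = attn q X W"
      have g: "((\<lambda>x. U \<bullet> a + (x - U$j) * a$j) has_real_derivative a$j) (at (U$j))"
        by (auto intro!: derivative_eq_intros)
      have "((\<lambda>x. \<sigma> (U \<bullet> a + (x - U$j) * a$j)) has_real_derivative deriv \<sigma> (U \<bullet> a) * a$j) (at (U$j))"
        using DERIV_chain2[OF d\<sigma>[of "U \<bullet> a + (U$j - U$j) * a$j"] g] by simp
      then have "((\<lambda>x. c * \<sigma> (U \<bullet> a + (x - U$j) * a$j)) has_real_derivative c * (deriv \<sigma> (U \<bullet> a) * a$j)) (at (U$j))"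
        by (rule DERIV_cmult)
      then show ?thesis using \<theta> Inl Inr by (simp add: hneur_def inner_upd a_def mult.assoc)
    next
      case (Inr jk)
      obtain j k where jk: "jk = (j, k)" by (cases jk) auto
      define z0 where "z0 = transpose X *v (W *v q)"
      define v where "v = transpose X *v axis j 1"
      define w where "w = transpose X *v U"
      define x0 where "x0 = W$j$k"
      have eq: "U \<bullet> attn q X (\<chi> l n. if l = j \<and> n = k then x else W$l$n) =
          (\<Sum>t\<in>UNIV. w$t * softmax (z0 + (q$k * (x - x0)) *s v) $ t)" for x
        by (simp add: attn_Wupd inner_Xmult z0_def v_def w_def x0_def)
      have eq0: "U \<bullet> attn q X W = (\<Sum>t\<in>UNIV. w$t * softmax (z0 + (q$k * (x0 - x0)) *s v) $ t)"
        by (simp add: attn_def inner_Xmult z0_def w_def)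
      have g: "((\<lambda>x. \<Sum>t\<in>UNIV. w$t * softmax (z0 + (q$k * (x - x0)) *s v) $ t) has_real_derivative
            (\<Sum>t\<in>UNIV. w$t * (q$k * (softmax_jac z0 *v v) $ t))) (at x0)"
        by (intro DERIV_sum DERIV_cmult softmax_deriv)
      have "((\<lambda>x. \<sigma> (\<Sum>t\<in>UNIV. w$t * softmax (z0 + (q$k * (x - x0)) *s v) $ t)) has_real_derivative
            deriv \<sigma> (U \<bullet> attn q X W) * (\<Sum>t\<in>UNIV. w$t * (q$k * (softmax_jac z0 *v v) $ t))) (at x0)"
        using DERIV_chain2[OF d\<sigma> g] eq0 by simp
      then have "((\<lambda>x. c * \<sigma> (\<Sum>t\<in>UNIV. w$t * softmax (z0 + (q$k * (x - x0)) *s v) $ t)) has_real_derivative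
            c * (deriv \<sigma> (U \<bullet> attn q X W) * (\<Sum>t\<in>UNIV. w$t * (q$k * (softmax_jac z0 *v v) $ t)))) (at x0)"
        by (rule DERIV_cmult)
      moreover have "c * (deriv \<sigma> (U \<bullet> attn q X W) * (\<Sum>t\<in>UNIV. w$t * (q$k * (softmax_jac z0 *v v) $ t)))
          = pd \<sigma> q X \<kappa> \<theta>"
        by (auto simp: \<theta> Inr jk \<open>\<kappa> = Inr r\<close> attnM_axis z0_def v_def w_def sum_distrib_left sum_distrib_right mult.assoc intro!: sum.cong
            mult.commute mult.left_commute)
      ultimately show ?thesis
        using \<theta> Inr jk \<open>\<kappa> = Inr r\<close> by (simp add: hneur_def eq x0_def)
    qed
  qed
qed

lemma partial_f_eq:
  assumes dif: "\<And>x. \<sigma> differentiable (at x)" and i: "i < m"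
  shows "partial_f \<sigma> m q X \<phi> i \<kappa> = pd \<sigma> q X \<kappa> (\<phi> i) / sqrt m"
proof -
  define T where "T \<theta> = fst \<theta> * hneur \<sigma> q X (fst (snd \<theta>)) (snd (snd \<theta>))" for \<theta> :: "'a neuron"
  define R where "R = (\<Sum>l\<in>{..<m} - {i}. T (\<phi> l))"
  have fn: "fnet \<sigma> m q X (\<phi>(i := \<theta>)) = (1 / sqrt m) * (T \<theta> + R)" for \<theta>
  proof -
    have "(\<Sum>l<m. T ((\<phi>(i := \<theta>)) l)) = T ((\<phi>(i := \<theta>)) i) + (\<Sum>l\<in>{..<m} - {i}. T ((\<phi>(i := \<theta>)) l))"
      using i by (intro sum.remove) auto
    also have "(\<Sum>l\<in>{..<m} - {i}. T ((\<phi>(i := \<theta>)) l)) = R"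
      unfolding R_def by (intro sum.cong) auto
    finally show ?thesis by (simp add: fnet_def T_def)
  qed
  have "((\<lambda>x. T (param_set \<kappa> x (\<phi> i))) has_real_derivative pd \<sigma> q X \<kappa> (\<phi> i)) (at (param_get \<kappa> (\<phi> i)))"
    unfolding T_def by (rule neuron_deriv[OF dif])
  then have "((\<lambda>x. (1 / sqrt m) * (T (param_set \<kappa> x (\<phi> i)) + R)) has_real_derivative
       (1 / sqrt m) * (pd \<sigma> q X \<kappa> (\<phi> i) + 0)) (at (param_get \<kappa> (\<phi> i)))"
    by (intro DERIV_cmult DERIV_add DERIV_const)
  then have "deriv (\<lambda>x. (1 / sqrt m) * (T (param_set \<kappa> x (\<phi> i)) + R)) (param_get \<kappa> (\<phi> i))
      = pd \<sigma> q X \<kappa> (\<phi> i) / sqrt m"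
    by (simp add: DERIV_imp_deriv)
  then show ?thesis by (simp add: partial_f_def fn)
qed

lemma mult_axis: "(U::real^'n) \<bullet> ((M::real^'n^'n) *v axis j 1) = (\<Sum>a\<in>UNIV. U$a * M$a$j)"
proof -
  have "(M *v axis j 1) $ a = M$a$j" for a
    by (simp add: matrix_vector_mult_def axis_def if_distrib cong: if_cong)
  then show ?thesis by (simp add: inner_vec_def)
qed

lemma quad_sym:
  fixes U :: "real^'n" and M M' :: "real^'n^'n"
  assumes sym: "\<And>a b. M'$a$b = M'$b$a"
  shows "(\<Sum>j\<in>UNIV. (U \<bullet> (M *v axis j 1)) * (U \<bullet> (M' *v axis j 1))) = U \<bullet> ((M ** M') *v U)"
proof -
  have "(\<Sum>j\<in>UNIV. (U \<bullet> (M *v axis j 1)) * (U \<bullet> (M' *v axis j 1)))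
      = (\<Sum>j\<in>UNIV. \<Sum>a\<in>UNIV. \<Sum>b\<in>UNIV. U$a * M$a$j * (M'$j$b * U$b))"
    by (simp add: mult_axis sum_product sym mult.commute)
  also have "\<dots> = (\<Sum>a\<in>UNIV. \<Sum>j\<in>UNIV. \<Sum>b\<in>UNIV. U$a * M$a$j * (M'$j$b * U$b))"
    by (rule sum.swap)
  also have "\<dots> = (\<Sum>a\<in>UNIV. \<Sum>b\<in>UNIV. \<Sum>j\<in>UNIV. U$a * M$a$j * (M'$j$b * U$b))"
    by (intro sum.cong refl sum.swap)
  also have "\<dots> = U \<bullet> ((M ** M') *v U)"
    by (simp add: inner_vec_def matrix_vector_mult_def matrix_matrix_mult_def sum_distrib_left
        sum_distrib_right mult.assoc)
  finally show ?thesis .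
qed

lemma softmax_jac_sym: "softmax_jac z $ a $ b = softmax_jac z $ b $ a"
  by (simp add: softmax_jac_def mult.commute)

lemma attnM_sym: "attnM q X W $ a $ b = attnM q X W $ b $ a"
proof -
  have "transpose (attnM q X W) = attnM q X W"
  proof -
    have "transpose (softmax_jac (transpose X *v (W *v q))) = softmax_jac (transpose X *v (W *v q))"
      by (simp add: transpose_def vec_eq_iff softmax_jac_sym)
    then show ?thesis
      by (simp add: attnM_def matrix_transpose_mul matrix_mul_assoc)
  qed
  then have "transpose (attnM q X W) $ b $ a = attnM q X W $ b $ a" by simp
  then show ?thesis by (simp add: transpose_def)
qed

definition gk :: "(real \<Rightarrow> real) \<Rightarrow> real^'d \<Rightarrow> real^'d \<Rightarrow> real^'t^'d \<Rightarrow> real^'t^'d \<Rightarrow> 'd neuron \<Rightarrow> real" where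
  "gk \<sigma> qx qx' X X' \<theta> = (case \<theta> of (c, U, W) \<Rightarrow>
     \<sigma> (U \<bullet> attn qx X W) * \<sigma> (U \<bullet> attn qx' X' W)
     + c^2 * (deriv \<sigma> (U \<bullet> attn qx X W) * deriv \<sigma> (U \<bullet> attn qx' X' W) * (attn qx X W \<bullet> attn qx' X' W))
     + c^2 * ((qx \<bullet> qx') * (deriv \<sigma> (U \<bullet> attn qx X W) * deriv \<sigma> (U \<bullet> attn qx' X' W)
         * (U \<bullet> ((attnM qx X W ** attnM qx' X' W) *v U)))))"

lemma sum_pd:
  "(\<Sum>\<kappa>\<in>UNIV. pd \<sigma> qx X \<kappa> \<theta> * pd \<sigma> qx' X' \<kappa> \<theta>) = gk \<sigma> qx qx' X X' \<theta>"
proof -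
  obtain c U W where \<theta>: "\<theta> = (c, U, W)" by (cases \<theta>) auto
  define f where "f \<kappa> = pd \<sigma> qx X \<kappa> \<theta> * pd \<sigma> qx' X' \<kappa> \<theta>" for \<kappa>
  define s1 where "s1 = deriv \<sigma> (U \<bullet> attn qx X W)"
  define s2 where "s2 = deriv \<sigma> (U \<bullet> attn qx' X' W)"
  have split: "(\<Sum>\<kappa>\<in>UNIV. f \<kappa>) = f (Inl ()) + (\<Sum>j\<in>UNIV. f (Inr (Inl j))) + (\<Sum>jk\<in>UNIV. f (Inr (Inr jk)))"
  proof -
    have "(\<Sum>\<kappa>\<in>(UNIV::'a coord set). f \<kappa>) = (\<Sum>\<kappa>\<in>UNIV <+> UNIV. f \<kappa>)" by simp
    also have "\<dots> = (\<Sum>u\<in>UNIV. f (Inl u)) + (\<Sum>r\<in>UNIV. f (Inr r))"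
      by (subst sum.Plus) (auto simp: comp_def)
    also have "(\<Sum>r\<in>(UNIV::('a + 'a \<times> 'a) set). f (Inr r)) = (\<Sum>r\<in>UNIV <+> UNIV. f (Inr r))" by simp
    also have "\<dots> = (\<Sum>j\<in>UNIV. f (Inr (Inl j))) + (\<Sum>jk\<in>UNIV. f (Inr (Inr jk)))"
      by (subst sum.Plus) (auto simp: comp_def)
    finally show ?thesis by (simp add: UNIV_unit)
  qed
  have p1: "(\<Sum>j\<in>UNIV. f (Inr (Inl j))) = c^2 * (s1 * s2 * (attn qx X W \<bullet> attn qx' X' W))"
    by (simp add: f_def \<theta> inner_vec_def sum_distrib_left s1_def s2_def power2_eq_square mult_ac)
  have p2: "(\<Sum>jk\<in>UNIV. f (Inr (Inr jk))) = c^2 * ((qx \<bullet> qx') * (s1 * s2 *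
           (U \<bullet> ((attnM qx X W ** attnM qx' X' W) *v U))))"
  proof -
    have qq: "(\<Sum>k\<in>UNIV. qx$k * qx'$k) = qx \<bullet> qx'" by (simp add: inner_vec_def)
    have "(\<Sum>jk\<in>UNIV. f (Inr (Inr jk))) = (\<Sum>j\<in>UNIV. \<Sum>k\<in>UNIV. f (Inr (Inr (j, k))))"
      by (simp add: sum.cartesian_product UNIV_Times_UNIV[symmetric] del: UNIV_Times_UNIV)
    also have "\<dots> = (\<Sum>j\<in>UNIV. \<Sum>k\<in>UNIV. c^2 * (s1 * s2) * ((U \<bullet> (attnM qx X W *v axis j 1)) * (U \<bullet> (attnM qx' X' W *v axis j 1))) * (qx$k * qx'$k))"
      by (simp add: f_def \<theta> s1_def s2_def power2_eq_square mult_ac)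
    also have "\<dots> = c^2 * (s1 * s2) * (\<Sum>j\<in>UNIV. (U \<bullet> (attnM qx X W *v axis j 1)) * (U \<bullet> (attnM qx' X' W *v axis j 1))) * (\<Sum>k\<in>UNIV. qx$k * qx'$k)"
      by (simp add: sum_distrib_left sum_distrib_right mult.assoc) (rule sum.swap)
    also have "\<dots> = c^2 * ((qx \<bullet> qx') * (s1 * s2 * (U \<bullet> ((attnM qx X W ** attnM qx' X' W) *v U))))"
      by (simp only: quad_sym[OF attnM_sym] qq mult_ac)
    finally show ?thesis .
  qed
  show ?thesis
    unfolding f_def[symmetric] split p1 p2
    by (simp add: f_def \<theta> gk_def s1_def s2_def)
qed

lemma sum_double: "(\<Sum>i<n+n. f i) = (\<Sum>i<n. f i) + (\<Sum>i<n. f (i + n)) " for f :: "nat \<Rightarrow> real"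
proof -
  have e: "{..<n+n} = {..<n} \<union> {n..<n+n}" by auto
  have "(\<Sum>i<n+n. f i) = (\<Sum>i<n. f i) + (\<Sum>i\<in>{n..<n+n}. f i)"
    unfolding e by (subst sum.union_disjoint) auto
  also have "(\<Sum>i\<in>{n..<n+n}. f i) = (\<Sum>i\<in>{0..<n}. f (i + n))"
    using sum.shift_bounds_nat_ivl[of f 0 n n] by simp
  finally show ?thesis by (simp add: atLeast0LessThan)
qed

lemma ntk_eq:
  assumes dif: "\<And>x. \<sigma> differentiable (at x)"
  shows "ntk \<sigma> m q X X' \<phi> = (\<Sum>i<m. gk \<sigma> (q X) (q X') X X' (\<phi> i)) / m"
proof -
  have "ntk \<sigma> m q X X' \<phi> = (\<Sum>i<m. \<Sum>\<kappa>\<in>UNIV. (pd \<sigma> (q X) X \<kappa> (\<phi> i) / sqrt m) * (pd \<sigma> (q X') X' \<kappa> (\<phi> i) / sqrt m))"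
    unfolding ntk_def by (intro sum.cong refl) (simp add: partial_f_eq[OF dif])
  also have "\<dots> = (\<Sum>i<m. (\<Sum>\<kappa>\<in>UNIV. pd \<sigma> (q X) X \<kappa> (\<phi> i) * pd \<sigma> (q X') X' \<kappa> (\<phi> i)) / m)"
    by (intro sum.cong refl) (simp add: sum_divide_distrib)
  also have "\<dots> = (\<Sum>i<m. gk \<sigma> (q X) (q X') X X' (\<phi> i)) / m"
    by (simp add: sum_pd sum_divide_distrib)
  finally show ?thesis .
qed

lemma gk_neg: "gk \<sigma> qx qx' X X' (- c, U, W) = gk \<sigma> qx qx' X X' (c, U, W)"
  by (simp add: gk_def)

lemma ntk_sym:
  assumes dif: "\<And>x. \<sigma> differentiable (at x)"
  shows "ntk \<sigma> (2 * n) q X X' (sym_init (2 * n) c U W) = (\<Sum>i<n. gk \<sigma> (q X) (q X') X X' (c i, U i, W i)) / n"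
proof -
  have "(\<Sum>i<2*n. gk \<sigma> (q X) (q X') X X' (sym_init (2 * n) c U W i)) =
        (\<Sum>i<n. gk \<sigma> (q X) (q X') X X' (sym_init (2 * n) c U W i)) +
        (\<Sum>i<n. gk \<sigma> (q X) (q X') X X' (sym_init (2 * n) c U W (i + n)))"
    using sum_double[where n=n] by (simp add: mult_2)
  also have "\<dots> = 2 * (\<Sum>i<n. gk \<sigma> (q X) (q X') X X' (c i, U i, W i))"
  proof -
    have s1: "sym_init (2 * n) c U W i = (c i, U i, W i)" if "i < n" for i
      using that by (simp add: sym_init_def)
    have s2: "sym_init (2 * n) c U W (i + n) = (- c i, U i, W i)" for i
      by (simp add: sym_init_def)
    show ?thesis by (simp add: s1 s2 gk_neg)
  qed
  finally show ?thesis by (simp add: ntk_eq[OF dif])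
qed

lemma deriv_measurable:
  fixes \<sigma> :: "real \<Rightarrow> real"
  assumes dif: "\<And>x. \<sigma> differentiable (at x)"
  shows "deriv \<sigma> \<in> borel_measurable borel"
proof (rule borel_measurable_LIMSEQ_real)
  have cont: "continuous_on UNIV \<sigma>"
    using dif by (simp add: continuous_at_imp_continuous_on differentiable_imp_continuous_within)
  show "(\<lambda>x. (\<sigma> (x + 1 / (Suc n)) - \<sigma> x) / (1 / Suc n)) \<in> borel_measurable borel" for n
    by (intro borel_measurable_continuous_onI continuous_intros continuous_on_compose2[OF cont]) auto
  fix x :: real assume "x \<in> space borel"
  have D: "(\<sigma> has_real_derivative deriv \<sigma> x) (at x)"
    using dif by (simp add: DERIV_deriv_iff_real_differentiable)
  then have lim: "((\<lambda>h. (\<sigma> (x + h) - \<sigma> x) / h) \<longlongrightarrow> deriv \<sigma> x) (at 0)"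
    by (simp add: DERIV_def)
  have h: "filterlim (\<lambda>n::nat. 1 / real (Suc n)) (at 0) sequentially"
  proof (subst filterlim_at, intro conjI)
    show "\<forall>\<^sub>F n in sequentially. 1 / real (Suc n) \<in> UNIV \<and> 1 / real (Suc n) \<noteq> 0" by simp
    show "(\<lambda>n::nat. 1 / real (Suc n)) \<longlonglongrightarrow> 0" by (rule LIMSEQ_Suc[OF lim_const_over_n])
  qed
  show "(\<lambda>n. (\<sigma> (x + 1 / (Suc n)) - \<sigma> x) / (1 / Suc n)) \<longlonglongrightarrow> deriv \<sigma> x"
    using filterlim_compose[OF lim h] by simp
qed

lemma borel_measurable_vec:
  fixes f :: "'a \<Rightarrow> 'b::euclidean_space^'n"
  assumes "\<And>i. (\<lambda>x. f x $ i) \<in> borel_measurable M"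
  shows "f \<in> borel_measurable M"
proof (subst borel_measurable_euclidean_space, intro ballI)
  fix b :: "'b^'n" assume "b \<in> Basis"
  then obtain i u where b: "b = axis i u" and u: "u \<in> Basis" by (auto simp: Basis_vec_def)
  have "(\<lambda>x. f x $ i \<bullet> u) \<in> borel_measurable M"
    using assms[of i] by measurable
  moreover have "f x \<bullet> b = f x $ i \<bullet> u" for x
  proof -
    have "f x \<bullet> b = axis i u \<bullet> f x" unfolding b by (rule inner_commute)
    also have "\<dots> = u \<bullet> f x $ i" by (rule inner_axis')
    also have "\<dots> = f x $ i \<bullet> u" by (rule inner_commute)
    finally show ?thesis .
  qed
  ultimately show "(\<lambda>x. f x \<bullet> b) \<in> borel_measurable M" by simp
qed

lemma sumexp_ne0: "(\<Sum>s\<in>(UNIV::'a::finite set). exp (z s)) \<noteq> (0::real)"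
  by (rule less_imp_neq[symmetric], rule sum_pos) auto

lemma cont_mmult: "continuous_on S f \<Longrightarrow> continuous_on S g \<Longrightarrow> continuous_on S (\<lambda>x. (f x :: real^'n^'m) ** (g x :: real^'k^'n))"
  unfolding matrix_matrix_mult_def by (intro continuous_intros)

lemma cont_mvec: "continuous_on S f \<Longrightarrow> continuous_on S g \<Longrightarrow> continuous_on S (\<lambda>x. (f x :: real^'n^'m) *v (g x :: real^'n))"
  unfolding matrix_vector_mult_def by (intro continuous_intros)

lemma cont_softmax: "continuous_on UNIV (softmax :: real^'t \<Rightarrow> real^'t)"
  unfolding softmax_def
  by (intro continuous_on_vec_lambda continuous_on_divide continuous_on_exp continuous_on_component
      continuous_on_sum continuous_on_id ballI sumexp_ne0)

lemma cont_jac: "continuous_on UNIV (softmax_jac :: real^'t \<Rightarrow> real^'t^'t)"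
proof -
  have c: "continuous_on UNIV (\<lambda>z. softmax z $ i)" for i :: 't
    by (intro continuous_on_component cont_softmax)
  have "continuous_on UNIV (\<lambda>z. (if i = j then softmax z $ i else 0) - softmax z $ i * softmax z $ j)" for i j
    by (cases "i = j") (simp_all, (intro continuous_on_diff continuous_on_mult continuous_on_minus continuous_on_component cont_softmax)+)
  then show ?thesis
    unfolding softmax_jac_def by (intro continuous_on_vec_lambda)
qed

lemma cont_attn: "continuous_on UNIV (\<lambda>W. attn q X W)"
proof -
  have "continuous_on UNIV (\<lambda>W. softmax (transpose X *v (W *v q)))"
    by (rule continuous_on_compose2[OF cont_softmax]) (intro cont_mvec continuous_on_const continuous_on_id, auto)
  then show ?thesis unfolding attn_def by (intro cont_mvec continuous_on_const)
qed

lemma cont_attnM: "continuous_on UNIV (\<lambda>W. attnM q X W)"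
proof -
  have "continuous_on UNIV (\<lambda>W. softmax_jac (transpose X *v (W *v q)))"
    by (rule continuous_on_compose2[OF cont_jac]) (intro cont_mvec continuous_on_const continuous_on_id, auto)
  then show ?thesis unfolding attnM_def by (intro cont_mmult continuous_on_const)
qed

lemma softmax_nonneg: "0 \<le> softmax z $ t"
  by (simp add: softmax_def sum_nonneg)

lemma softmax_sum: "(\<Sum>t\<in>UNIV. softmax z $ t) = 1"
  by (simp add: softmax_def sum_divide_distrib[symmetric] sumexp_ne0)

lemma softmax_le1: "softmax z $ t \<le> 1"
proof -
  have "softmax z $ t \<le> (\<Sum>s\<in>UNIV. softmax z $ s)"
    by (rule member_le_sum) (auto simp: softmax_nonneg)
  then show ?thesis by (simp add: softmax_sum)
qed

lemma jac_bound: "\<bar>softmax_jac z $ s $ t\<bar> \<le> 1"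
proof -
  define p where "p = softmax z $ s"
  define r where "r = softmax z $ t"
  have a: "0 \<le> p" "p \<le> 1" "0 \<le> r" "r \<le> 1"
    by (simp_all add: p_def r_def softmax_nonneg softmax_le1)
  have pr: "0 \<le> p * r" "p * r \<le> 1" using a by (simp_all add: mult_le_one)
  have pp: "0 \<le> p * p" "p * p \<le> p" using a by (auto intro: mult_left_le)
  show ?thesis
  proof (cases "s = t")
    case True
    then have "softmax_jac z $ s $ t = p - p * p" by (simp add: softmax_jac_def p_def)
    then show ?thesis using pp a by (simp only: abs_le_iff) linarith
  next
    case False
    then have "softmax_jac z $ s $ t = - (p * r)" by (simp add: softmax_jac_def p_def r_def)
    then show ?thesis using pr by (simp only: abs_le_iff) linarith
  qed
qed

lemma inX_entry: "inX X \<Longrightarrow> \<bar>X $ a $ s\<bar> \<le> 1"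
proof -
  assume "inX X"
  then have "norm (column s X) \<le> 1" by (simp add: inX_def)
  moreover have "\<bar>column s X $ a\<bar> \<le> norm (column s X)" by (rule component_le_norm_cart)
  ultimately show ?thesis by (simp add: column_def)
qed

lemma norm_attn: assumes "inX X" shows "norm (attn q X W) \<le> 1"
proof -
  define p where "p = softmax (transpose X *v (W *v q))"
  have "norm (attn q X W) = norm (\<Sum>t\<in>UNIV. p $ t *s column t X)"
    by (simp add: attn_def p_def matrix_mult_sum)
  also have "\<dots> \<le> (\<Sum>t\<in>UNIV. norm (p $ t *s column t X))" by (rule norm_sum)
  also have "\<dots> \<le> (\<Sum>t\<in>UNIV. p $ t)"
  proof (rule sum_mono)
    fix t
    have "norm (p $ t *s column t X) = p $ t * norm (column t X)"
      by (simp add: scalar_mult_eq_scaleR p_def softmax_nonneg)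
    also have "\<dots> \<le> p $ t * 1"
      using assms by (intro mult_left_mono) (auto simp: inX_def p_def softmax_nonneg)
    finally show "norm (p $ t *s column t X) \<le> p $ t" by simp
  qed
  also have "\<dots> = 1" by (simp add: p_def softmax_sum)
  finally show ?thesis .
qed

lemma attnM_entry: fixes X :: "real^'t^'d" assumes "inX X" shows "\<bar>attnM q X W $ a $ b\<bar> \<le> real CARD('t) * real CARD('t)"
proof -
  define J where "J = softmax_jac (transpose X *v (W *v q))"
  have "attnM q X W $ a $ b = (\<Sum>s\<in>UNIV. \<Sum>t\<in>UNIV. X$a$s * J$s$t * X$b$t)"
    by (simp add: attnM_def J_def matrix_matrix_mult_def transpose_def sum_distrib_right sum_distrib_left mult.assoc)
      (rule sum.swap)
  also have "\<bar>\<dots>\<bar> \<le> (\<Sum>s\<in>(UNIV::'t set). \<Sum>t\<in>(UNIV::'t set). 1)"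
  proof -
    have "\<bar>X$a$s * J$s$t * X$b$t\<bar> \<le> 1" for s t
    proof -
      have "\<bar>X$a$s\<bar> \<le> 1" "\<bar>J$s$t\<bar> \<le> 1" "\<bar>X$b$t\<bar> \<le> 1"
        using assms by (simp_all add: inX_entry J_def jac_bound)
      then show ?thesis by (simp add: abs_mult mult_le_one)
    qed
    then show ?thesis
      by (intro order.trans[OF sum_abs] sum_mono order.trans[OF sum_abs]) auto
  qed
  finally show ?thesis by simp
qed

lemma quad_bound:
  fixes X X' :: "real^'t^'d" and U :: "real^'d"
  assumes "inX X" "inX X'"
  shows "\<bar>U \<bullet> ((attnM q X W ** attnM q' X' W) *v U)\<bar> \<le>
     (real CARD('d) * real CARD('d) * (real CARD('d) * (real CARD('t) * real CARD('t)) * (real CARD('t) * real CARD('t)))) * (norm U)^2"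
proof -
  define A where "A = attnM q X W ** attnM q' X' W"
  define B where "B = real CARD('d) * (real CARD('t) * real CARD('t)) * (real CARD('t) * real CARD('t))"
  have ent: "\<bar>A $ a $ b\<bar> \<le> B" for a b
  proof -
    have "\<bar>A $ a $ b\<bar> \<le> (\<Sum>l\<in>(UNIV::'d set). \<bar>attnM q X W $ a $ l * attnM q' X' W $ l $ b\<bar>)"
      by (simp add: A_def matrix_matrix_mult_def sum_abs)
    also have "\<dots> \<le> (\<Sum>l\<in>(UNIV::'d set). (real CARD('t) * real CARD('t)) * (real CARD('t) * real CARD('t)))"
      by (intro sum_mono) (simp add: abs_mult mult_mono attnM_entry assms)
    finally show ?thesis by (simp add: B_def)
  qed
  have "\<bar>U \<bullet> (A *v U)\<bar> \<le> norm U * norm (A *v U)" by (rule Cauchy_Schwarz_ineq2)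
  also have "norm (A *v U) \<le> onorm ((*v) A) * norm U"
    by (rule onorm) (simp add: matrix_vector_mul_bounded_linear)
  also have "onorm ((*v) A) \<le> real CARD('d) * real CARD('d) * B"
    by (rule onorm_le_matrix_component[OF ent])
  finally have "\<bar>U \<bullet> (A *v U)\<bar> \<le> norm U * ((real CARD('d) * real CARD('d) * B) * norm U)"
    by (simp add: mult_left_mono mult_right_mono)
  then show ?thesis by (simp add: A_def B_def power2_eq_square mult_ac)
qed

lemma ab_le: fixes a b :: real assumes "0 \<le> a" "0 \<le> b" shows "a * b \<le> a^2 + b^2"
proof -
  have "0 \<le> (a - b)^2" by simp
  then have "2 * (a * b) \<le> a^2 + b^2" by (simp add: power2_eq_square algebra_simps)
  moreover have "0 \<le> a * b" using assms by simp
  ultimately show ?thesis by linarith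
qed

lemma sq_sum_le: fixes x y :: real shows "(x + y)^2 \<le> 2 * x^2 + 2 * y^2"
proof -
  have "0 \<le> (x - y)^2" by simp
  then show ?thesis by (simp add: power2_eq_square algebra_simps)
qed

theorem lemma4:
  fixes M :: "'w measure"
    and c :: "nat \<Rightarrow> 'w \<Rightarrow> real"
    and U :: "nat \<Rightarrow> 'w \<Rightarrow> real^'d"
    and W :: "nat \<Rightarrow> 'w \<Rightarrow> real^'d^'d"
    and \<sigma> :: "real \<Rightarrow> real" and \<sigma>0 \<sigma>1 :: real
    and q :: "real^'t^'d \<Rightarrow> real^'d"
    and X X' :: "real^'t^'d"
  assumes "prob_space M"
    and indep: "prob_space.indep_vars M (\<lambda>_. borel)
                  (\<lambda>(i, \<kappa>) \<omega>. param_get \<kappa> (c i \<omega>, U i \<omega>, W i \<omega>)) UNIV"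
    and c_dist: "\<And>i. measure M {\<omega>\<in>space M. c i \<omega> = 1} = 1/2 \<and>
                      measure M {\<omega>\<in>space M. c i \<omega> = -1} = 1/2"
    and U_dist: "\<And>i j. distributed M lborel (\<lambda>\<omega>. U i \<omega> $ j) std_normal_density"
    and W_dist: "\<And>i j k. distributed M lborel (\<lambda>\<omega>. W i \<omega> $ j $ k) std_normal_density"
    and \<sigma>_diff: "\<And>x. \<sigma> differentiable (at x)"
    and \<sigma>_bd: "\<And>x. \<bar>\<sigma> x\<bar> \<le> \<sigma>0"
    and \<sigma>'_bd: "\<And>x. \<bar>deriv \<sigma> x\<bar> \<le> \<sigma>1"
    and q_bd: "\<And>Y. inX Y \<Longrightarrow> norm (q Y) \<le> 1"
    and X: "inX X" and X': "inX X'"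
  shows "AE \<omega> in M.
     (\<lambda>n. ntk \<sigma> (2 * n) q X X' (sym_init (2 * n) (\<lambda>i. c i \<omega>) (\<lambda>i. U i \<omega>) (\<lambda>i. W i \<omega>)))
     \<longlonglongrightarrow>
       (\<integral>\<omega>. \<sigma> (U 0 \<omega> \<bullet> attn (q X) X (W 0 \<omega>)) * \<sigma> (U 0 \<omega> \<bullet> attn (q X') X' (W 0 \<omega>)) \<partial>M)
     + (\<integral>\<omega>. deriv \<sigma> (U 0 \<omega> \<bullet> attn (q X) X (W 0 \<omega>)) * deriv \<sigma> (U 0 \<omega> \<bullet> attn (q X') X' (W 0 \<omega>))
             * (attn (q X) X (W 0 \<omega>) \<bullet> attn (q X') X' (W 0 \<omega>)) \<partial>M)
     + (q X \<bullet> q X') *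
       (\<integral>\<omega>. deriv \<sigma> (U 0 \<omega> \<bullet> attn (q X) X (W 0 \<omega>)) * deriv \<sigma> (U 0 \<omega> \<bullet> attn (q X') X' (W 0 \<omega>))
             * (U 0 \<omega> \<bullet> ((attnM (q X) X (W 0 \<omega>) ** attnM (q X') X' (W 0 \<omega>)) *v U 0 \<omega>)) \<partial>M)"
proof -
  interpret P: prob_space M by fact
  define Xc where "Xc = (\<lambda>(i, \<kappa>) \<omega>. param_get \<kappa> (c i \<omega>, U i \<omega>, W i \<omega>))"
  have indX: "P.indep_vars (\<lambda>_. borel) Xc UNIV" using indep unfolding Xc_def .
  have Xc_meas: "Xc p \<in> borel_measurable M" for p using indX unfolding P.indep_vars_def by (cases p) auto
  have Xc1: "Xc (i, Inl ()) = c i" for i by (rule ext) (simp add: Xc_def)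
  have Xc2: "Xc (i, Inr (Inl j)) = (\<lambda>\<omega>. U i \<omega> $ j)" for i j by (rule ext) (simp add: Xc_def)
  have Xc3: "Xc (i, Inr (Inr (j, k))) = (\<lambda>\<omega>. W i \<omega> $ j $ k)" for i j k by (rule ext) (simp add: Xc_def)
  have c_meas: "c i \<in> borel_measurable M" for i using Xc_meas[of "(i, Inl ())"] by (simp add: Xc1)
  have Uc_meas: "(\<lambda>\<omega>. U i \<omega> $ j) \<in> borel_measurable M" for i j using Xc_meas[of "(i, Inr (Inl j))"] by (simp add: Xc2)
  have Wc_meas: "(\<lambda>\<omega>. W i \<omega> $ j $ k) \<in> borel_measurable M" for i j k
    using Xc_meas[of "(i, Inr (Inr (j, k)))"] by (simp add: Xc3)
  have U_meas: "U i \<in> borel_measurable M" for i by (intro borel_measurable_vec Uc_meas)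
  have W_meas: "W i \<in> borel_measurable M" for i by (intro borel_measurable_vec Wc_meas)
  have UW_meas: "(\<lambda>\<omega>. (U i \<omega>, W i \<omega>)) \<in> borel_measurable M" for i
    unfolding borel_prod[symmetric] using U_meas W_meas by (rule measurable_Pair)

  have cAE: "AE \<omega> in M. \<forall>i. (c i \<omega>)^2 = 1"
  proof (subst AE_all_countable, intro allI)
    fix i
    define A where "A = {\<omega>\<in>space M. c i \<omega> = 1}"
    define B where "B = {\<omega>\<in>space M. c i \<omega> = -1}"
    have AB: "A \<in> P.events" "B \<in> P.events" unfolding A_def B_def using c_meas by measurable
    have dj: "A \<inter> B = {}" by (auto simp: A_def B_def)
    have "P.prob (A \<union> B) = 1"
      using P.finite_measure_Union[OF AB dj] c_dist[of i] by (simp add: A_def B_def)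
    then have "AE \<omega> in M. \<omega> \<in> A \<union> B" by (rule P.AE_prob_1)
    then show "AE \<omega> in M. (c i \<omega>)^2 = 1" by (rule AE_mp) (auto intro!: AE_I2 simp: A_def B_def)
  qed

  define qx where "qx = q X"
  define qx' where "qx' = q X'"
  define Gp where "Gp p = gk \<sigma> qx qx' X X' (1, fst p, snd p)" for p :: "(real^'d) \<times> (real^'d^'d)"
  define Y where "Y i \<omega> = Gp (U i \<omega>, W i \<omega>)" for i \<omega>
  have gk_c: "gk \<sigma> qx qx' X X' (cc, u, w) = Gp (u, w)" if "cc^2 = 1" for cc u w
    using that by (simp add: gk_def Gp_def)

  have cont\<sigma>: "continuous_on UNIV \<sigma>"
    using \<sigma>_diff by (simp add: continuous_at_imp_continuous_on differentiable_imp_continuous_within)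
  have \<sigma>_meas[measurable]: "\<sigma> \<in> borel_measurable borel" by (rule borel_measurable_continuous_onI[OF cont\<sigma>])
  have d\<sigma>_meas[measurable]: "deriv \<sigma> \<in> borel_measurable borel" by (rule deriv_measurable[OF \<sigma>_diff])
  define s1 where "s1 p = fst p \<bullet> attn qx X (snd p)" for p :: "(real^'d) \<times> (real^'d^'d)"
  define s2 where "s2 p = fst p \<bullet> attn qx' X' (snd p)" for p :: "(real^'d) \<times> (real^'d^'d)"
  define aa where "aa p = attn qx X (snd p) \<bullet> attn qx' X' (snd p)" for p :: "(real^'d) \<times> (real^'d^'d)"
  define rr where "rr p = fst p \<bullet> ((attnM qx X (snd p) ** attnM qx' X' (snd p)) *v fst p)" for p :: "(real^'d) \<times> (real^'d^'d)"
  have cA: "continuous_on UNIV (\<lambda>p::(real^'d) \<times> (real^'d^'d). attn qq YY (snd p))" for qq YY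
    by (rule continuous_on_compose2[OF cont_attn continuous_on_snd]) auto
  have cM: "continuous_on UNIV (\<lambda>p::(real^'d) \<times> (real^'d^'d). attnM qq YY (snd p))" for qq YY
    by (rule continuous_on_compose2[OF cont_attnM continuous_on_snd]) auto
  have s1_meas[measurable]: "s1 \<in> borel_measurable borel" unfolding s1_def
    by (intro borel_measurable_continuous_onI continuous_on_inner continuous_on_fst continuous_on_id cA)
  have s2_meas[measurable]: "s2 \<in> borel_measurable borel" unfolding s2_def
    by (intro borel_measurable_continuous_onI continuous_on_inner continuous_on_fst continuous_on_id cA)
  have aa_meas[measurable]: "aa \<in> borel_measurable borel" unfolding aa_def
    by (intro borel_measurable_continuous_onI continuous_on_inner cA)
  have rr_meas[measurable]: "rr \<in> borel_measurable borel" unfolding rr_def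
    by (intro borel_measurable_continuous_onI continuous_on_inner continuous_on_fst continuous_on_id cont_mvec cont_mmult cM)
  have Gp_eq: "Gp p = \<sigma> (s1 p) * \<sigma> (s2 p) + deriv \<sigma> (s1 p) * deriv \<sigma> (s2 p) * aa p
      + (qx \<bullet> qx') * (deriv \<sigma> (s1 p) * deriv \<sigma> (s2 p) * rr p)" for p
    by (cases p) (simp add: Gp_def gk_def s1_def s2_def aa_def rr_def)
  have Gp_meas[measurable]: "Gp \<in> borel_measurable borel"
    unfolding Gp_eq[abs_def] by measurable
  have Y_meas[measurable]: "Y i \<in> borel_measurable M" for i
    unfolding Y_def by (rule measurable_compose[OF UW_meas Gp_meas])

  define K where "K = range (Inr :: ('d + 'd \<times> 'd) \<Rightarrow> 'd coord)"
  define recUW where "recUW f = ((\<chi> j. f (Inr (Inl j))), (\<chi> j k. f (Inr (Inr (j, k)))))"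
    for f :: "'d coord \<Rightarrow> real"
  define \<Phi> where "\<Phi> f = Gp (recUW f)" for f
  define V where "V i \<omega> = (\<lambda>\<kappa>\<in>K. Xc (i, \<kappa>) \<omega>)" for i \<omega>
  have compK: "(\<lambda>f. f \<kappa>) \<in> borel_measurable (PiM K (\<lambda>_. borel))" if "\<kappa> \<in> K" for \<kappa>
    by (rule measurable_component_singleton[OF that])
  have recUW_meas: "recUW \<in> borel_measurable (PiM K (\<lambda>_. borel))"
    unfolding borel_prod[symmetric] recUW_def
    by (intro measurable_Pair borel_measurable_vec) (auto intro!: compK simp: K_def)
  have \<Phi>_meas: "\<Phi> \<in> borel_measurable (PiM K (\<lambda>_. borel))"
    unfolding \<Phi>_def by (rule measurable_compose[OF recUW_meas Gp_meas])
  have V_meas: "V i \<in> measurable M (PiM K (\<lambda>_. borel))" for i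
    unfolding V_def by (intro measurable_restrict Xc_meas)
  have YV: "Y i \<omega> = \<Phi> (V i \<omega>)" for i \<omega>
  proof -
    have "recUW (V i \<omega>) = (U i \<omega>, W i \<omega>)"
      by (simp add: recUW_def V_def K_def Xc_def vec_eq_iff)
    then show ?thesis by (simp add: Y_def \<Phi>_def)
  qed
  have Y_ind: "P.indep_var borel (Y i) borel (Y j)" if ij: "i \<noteq> j" for i j
  proof -
    have iv: "P.indep_var (PiM ({i} \<times> K) (\<lambda>_. borel)) (\<lambda>\<omega>. restrict (\<lambda>p. Xc p \<omega>) ({i} \<times> K))
                          (PiM ({j} \<times> K) (\<lambda>_. borel)) (\<lambda>\<omega>. restrict (\<lambda>p. Xc p \<omega>) ({j} \<times> K))"
      by (rule P.indep_var_restrict[OF indX]) (use ij in auto)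
    have hm: "(\<lambda>f. \<Phi> (\<lambda>\<kappa>\<in>K. f (l, \<kappa>))) \<in> borel_measurable (PiM ({l} \<times> K) (\<lambda>_. borel))" for l
    proof (rule measurable_compose[OF _ \<Phi>_meas])
      show "(\<lambda>f. \<lambda>\<kappa>\<in>K. f (l, \<kappa>)) \<in> measurable (PiM ({l} \<times> K) (\<lambda>_. borel)) (PiM K (\<lambda>_. borel))"
        by (intro measurable_restrict measurable_component_singleton) auto
    qed
    have "P.indep_var borel ((\<lambda>f. \<Phi> (\<lambda>\<kappa>\<in>K. f (i, \<kappa>))) \<circ> (\<lambda>\<omega>. restrict (\<lambda>p. Xc p \<omega>) ({i} \<times> K)))
                     borel ((\<lambda>f. \<Phi> (\<lambda>\<kappa>\<in>K. f (j, \<kappa>))) \<circ> (\<lambda>\<omega>. restrict (\<lambda>p. Xc p \<omega>) ({j} \<times> K)))"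
      by (rule P.indep_var_compose[OF iv hm hm])
    moreover have "((\<lambda>f. \<Phi> (\<lambda>\<kappa>\<in>K. f (l, \<kappa>))) \<circ> (\<lambda>\<omega>. restrict (\<lambda>p. Xc p \<omega>) ({l} \<times> K))) = Y l" for l
    proof (rule ext)
      fix \<omega>
      have "(\<lambda>\<kappa>\<in>K. restrict (\<lambda>p. Xc p \<omega>) ({l} \<times> K) (l, \<kappa>)) = V l \<omega>"
        by (auto simp: V_def restrict_def)
      then show "((\<lambda>f. \<Phi> (\<lambda>\<kappa>\<in>K. f (l, \<kappa>))) \<circ> (\<lambda>\<omega>. restrict (\<lambda>p. Xc p \<omega>) ({l} \<times> K))) \<omega> = Y l \<omega>"
        by (simp add: YV)
    qed
    ultimately show ?thesis by simp
  qed
  define Nn where "Nn = density lborel (\<lambda>x. ennreal (std_normal_density x))"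
  have distrV: "distr M (PiM K (\<lambda>_. borel)) (V i) = PiM K (\<lambda>_. Nn)" for i
  proof -
    have "P.indep_vars (\<lambda>\<kappa>. PiM {(i, \<kappa>)} (\<lambda>_. borel)) (\<lambda>\<kappa> \<omega>. restrict (\<lambda>p. Xc p \<omega>) {(i, \<kappa>)}) K"
      by (rule P.indep_vars_restrict[OF indX]) (auto simp: disjoint_family_on_def)
    then have "P.indep_vars (\<lambda>_. borel) (\<lambda>\<kappa> \<omega>. (\<lambda>f. f (i, \<kappa>)) (restrict (\<lambda>p. Xc p \<omega>) {(i, \<kappa>)})) K"
      by (rule P.indep_vars_compose2) (rule measurable_component_singleton, simp)
    then have indK: "P.indep_vars (\<lambda>_. borel) (\<lambda>\<kappa>. Xc (i, \<kappa>)) K" by simp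
    have "distr M (PiM K (\<lambda>_. borel)) (\<lambda>\<omega>. \<lambda>\<kappa>\<in>K. Xc (i, \<kappa>) \<omega>) = PiM K (\<lambda>\<kappa>. distr M borel (Xc (i, \<kappa>)))"
      using P.indep_vars_iff_distr_eq_PiM[where I=K and M'="\<lambda>_. borel" and X="\<lambda>\<kappa>. Xc (i, \<kappa>)"] indK Xc_meas
      by (simp add: K_def)
    also have "\<dots> = PiM K (\<lambda>_. Nn)"
    proof (rule PiM_cong[OF refl])
      fix \<kappa> assume "\<kappa> \<in> K"
      then obtain r where r: "\<kappa> = Inr r" by (auto simp: K_def)
      have "distr M borel (Xc (i, \<kappa>)) = distr M lborel (Xc (i, \<kappa>))"
        by (rule distr_cong) auto
      also have "\<dots> = Nn"
      proof (cases r)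
        case (Inl j)
        show ?thesis using U_dist[of i j] unfolding Nn_def r Inl Xc2
          by (rule distributed_distr_eq_density)
      next
        case (Inr jk)
        obtain j k where jk: "jk = (j, k)" by (cases jk) auto
        show ?thesis using W_dist[of i j k] unfolding Nn_def r Inr jk Xc3
          by (rule distributed_distr_eq_density)
      qed
      finally show "distr M borel (Xc (i, \<kappa>)) = Nn" .
    qed
    finally show ?thesis unfolding V_def .
  qed
  have Y_distr: "distr M borel (Y i) = distr M borel (Y 0)" for i
  proof -
    have "distr M borel (Y l) = distr (PiM K (\<lambda>_. Nn)) borel \<Phi>" for l
    proof -
      have "Y l = \<Phi> \<circ> V l" by (rule ext) (simp add: YV)
      then have "distr M borel (Y l) = distr M borel (\<Phi> \<circ> V l)" by simp
      also have "\<dots> = distr (distr M (PiM K (\<lambda>_. borel)) (V l)) borel \<Phi>"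
        by (rule distr_distr[symmetric, OF \<Phi>_meas V_meas])
      finally show ?thesis by (simp add: distrV)
    qed
    then show ?thesis by simp
  qed

  have \<sigma>0_nn: "0 \<le> \<sigma>0" using \<sigma>_bd[of 0] by linarith
  have \<sigma>1_nn: "0 \<le> \<sigma>1" using \<sigma>'_bd[of 0] by linarith
  define Bx where "Bx = (real CARD('d) * real CARD('d) * (real CARD('d) * (real CARD('t) * real CARD('t)) * (real CARD('t) * real CARD('t))))"
  have Bx_nn: "0 \<le> Bx" by (simp add: Bx_def)
  have rr_bd: "\<bar>rr p\<bar> \<le> Bx * (norm (fst p))^2" for p
    using quad_bound[OF X X'] unfolding rr_def Bx_def by blast
  have aa_bd: "\<bar>aa p\<bar> \<le> 1" for p
  proof -
    have "\<bar>aa p\<bar> \<le> norm (attn qx X (snd p)) * norm (attn qx' X' (snd p))"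
      unfolding aa_def by (rule Cauchy_Schwarz_ineq2)
    also have "\<dots> \<le> 1" using norm_attn[OF X] norm_attn[OF X'] by (intro mult_le_one) auto
    finally show ?thesis .
  qed
  have dd_bd: "\<bar>deriv \<sigma> x * deriv \<sigma> y\<bar> \<le> \<sigma>1 * \<sigma>1" for x y
    unfolding abs_mult by (intro mult_mono \<sigma>'_bd) (auto simp: \<sigma>1_nn)
  have ss_bd: "\<bar>\<sigma> x * \<sigma> y\<bar> \<le> \<sigma>0 * \<sigma>0" for x y
    unfolding abs_mult by (intro mult_mono \<sigma>_bd) (auto simp: \<sigma>0_nn)
  have t2_bd: "\<bar>deriv \<sigma> (s1 p) * deriv \<sigma> (s2 p) * aa p\<bar> \<le> \<sigma>1 * \<sigma>1" for p
  proof -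
    have "\<bar>deriv \<sigma> (s1 p) * deriv \<sigma> (s2 p) * aa p\<bar> \<le> (\<sigma>1 * \<sigma>1) * 1"
      unfolding abs_mult[of _ "aa p"] by (intro mult_mono dd_bd aa_bd) auto
    then show ?thesis by simp
  qed
  have t3_bd: "\<bar>deriv \<sigma> (s1 p) * deriv \<sigma> (s2 p) * rr p\<bar> \<le> \<sigma>1 * \<sigma>1 * Bx * (norm (fst p))^2" for p
  proof -
    have "\<bar>deriv \<sigma> (s1 p) * deriv \<sigma> (s2 p) * rr p\<bar> \<le> (\<sigma>1 * \<sigma>1) * (Bx * (norm (fst p))^2)"
      unfolding abs_mult[of _ "rr p"] by (intro mult_mono dd_bd rr_bd) auto
    then show ?thesis by (simp add: mult_ac)
  qed
  define A where "A = \<sigma>0 * \<sigma>0 + \<sigma>1 * \<sigma>1"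
  define Bq where "Bq = \<bar>qx \<bullet> qx'\<bar> * (\<sigma>1 * \<sigma>1 * Bx)"
  have Gp_bd: "\<bar>Gp p\<bar> \<le> A + Bq * (norm (fst p))^2" for p
  proof -
    have "\<bar>(qx \<bullet> qx') * (deriv \<sigma> (s1 p) * deriv \<sigma> (s2 p) * rr p)\<bar> \<le> \<bar>qx \<bullet> qx'\<bar> * (\<sigma>1 * \<sigma>1 * Bx * (norm (fst p))^2)"
      unfolding abs_mult[of "qx \<bullet> qx'"] by (intro mult_left_mono t3_bd) auto
    then have "\<bar>(qx \<bullet> qx') * (deriv \<sigma> (s1 p) * deriv \<sigma> (s2 p) * rr p)\<bar> \<le> Bq * (norm (fst p))^2"
      by (simp add: Bq_def mult_ac)
    moreover note ss_bd[of "s1 p" "s2 p"] t2_bd[of p]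
    ultimately show ?thesis unfolding Gp_eq[of p] A_def by linarith
  qed
  have norm_sq: "(norm (u::real^'d))^2 = (\<Sum>j\<in>UNIV. (u$j)^2)" for u
    by (simp only: power2_norm_eq_inner) (simp add: inner_vec_def power2_eq_square)
  have mom: "integrable M (\<lambda>\<omega>. (U 0 \<omega> $ j)^k)" for j k
    using distributed_integrable[OF U_dist[of 0 j], of "\<lambda>x. x^k"] integrable_std_normal_moment[of k] by simp
  have N2_int: "integrable M (\<lambda>\<omega>. (norm (U 0 \<omega>))^2)"
    unfolding norm_sq using mom by (intro Bochner_Integration.integrable_sum) auto
  have N4_int: "integrable M (\<lambda>\<omega>. ((norm (U 0 \<omega>))^2)^2)"
  proof -
    have e: "((norm (U 0 \<omega>))^2)^2 = (\<Sum>j\<in>UNIV. \<Sum>k\<in>UNIV. (U 0 \<omega> $ j)^2 * (U 0 \<omega> $ k)^2)" for \<omega>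
      unfolding norm_sq by (simp add: power2_eq_square[of "sum _ _"] sum_product)
    have "integrable M (\<lambda>\<omega>. (U 0 \<omega> $ j)^2 * (U 0 \<omega> $ k)^2)" for j k
    proof (rule Bochner_Integration.integrable_bound)
      show "integrable M (\<lambda>\<omega>. (U 0 \<omega> $ j)^4 + (U 0 \<omega> $ k)^4)" using mom by auto
      show "(\<lambda>\<omega>. (U 0 \<omega> $ j)^2 * (U 0 \<omega> $ k)^2) \<in> borel_measurable M" using Uc_meas by measurable
      show "AE \<omega> in M. norm ((U 0 \<omega> $ j)^2 * (U 0 \<omega> $ k)^2) \<le> norm ((U 0 \<omega> $ j)^4 + (U 0 \<omega> $ k)^4)"
      proof (intro AE_I2)
        fix \<omega>
        have "(U 0 \<omega> $ j)^2 * (U 0 \<omega> $ k)^2 \<le> ((U 0 \<omega> $ j)^2)^2 + ((U 0 \<omega> $ k)^2)^2"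
          by (rule ab_le) auto
        then show "norm ((U 0 \<omega> $ j)^2 * (U 0 \<omega> $ k)^2) \<le> norm ((U 0 \<omega> $ j)^4 + (U 0 \<omega> $ k)^4)"
          by (simp add: power_mult[symmetric])
      qed
    qed
    then show ?thesis unfolding e by (intro Bochner_Integration.integrable_sum) auto
  qed
  have Y_sq: "integrable M (\<lambda>\<omega>. (Y 0 \<omega>)^2)"
  proof (rule Bochner_Integration.integrable_bound)
    show "integrable M (\<lambda>\<omega>. 2 * A^2 + 2 * Bq^2 * ((norm (U 0 \<omega>))^2)^2)" using N4_int by auto
    show "(\<lambda>\<omega>. (Y 0 \<omega>)^2) \<in> borel_measurable M" by measurable
    show "AE \<omega> in M. norm ((Y 0 \<omega>)^2) \<le> norm (2 * A^2 + 2 * Bq^2 * ((norm (U 0 \<omega>))^2)^2)"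
    proof (intro AE_I2)
      fix \<omega>
      have b: "\<bar>Y 0 \<omega>\<bar> \<le> A + Bq * (norm (U 0 \<omega>))^2" using Gp_bd[of "(U 0 \<omega>, W 0 \<omega>)"] by (simp add: Y_def)
      have "(Y 0 \<omega>)^2 = \<bar>Y 0 \<omega>\<bar>^2" by simp
      also have "\<dots> \<le> (A + Bq * (norm (U 0 \<omega>))^2)^2" by (rule power_mono[OF b]) simp
      also have "\<dots> \<le> 2 * A^2 + 2 * (Bq * (norm (U 0 \<omega>))^2)^2" by (rule sq_sum_le)
      also have "\<dots> = 2 * A^2 + 2 * Bq^2 * ((norm (U 0 \<omega>))^2)^2" by (simp add: power_mult_distrib)
      finally show "norm ((Y 0 \<omega>)^2) \<le> norm (2 * A^2 + 2 * Bq^2 * ((norm (U 0 \<omega>))^2)^2)" by simp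
    qed
  qed

  define f1 where "f1 \<omega> = \<sigma> (U 0 \<omega> \<bullet> attn (q X) X (W 0 \<omega>)) * \<sigma> (U 0 \<omega> \<bullet> attn (q X') X' (W 0 \<omega>))" for \<omega>
  define f2 where "f2 \<omega> = deriv \<sigma> (U 0 \<omega> \<bullet> attn (q X) X (W 0 \<omega>)) * deriv \<sigma> (U 0 \<omega> \<bullet> attn (q X') X' (W 0 \<omega>))
             * (attn (q X) X (W 0 \<omega>) \<bullet> attn (q X') X' (W 0 \<omega>))" for \<omega>
  define f3 where "f3 \<omega> = deriv \<sigma> (U 0 \<omega> \<bullet> attn (q X) X (W 0 \<omega>)) * deriv \<sigma> (U 0 \<omega> \<bullet> attn (q X') X' (W 0 \<omega>))
             * (U 0 \<omega> \<bullet> ((attnM (q X) X (W 0 \<omega>) ** attnM (q X') X' (W 0 \<omega>)) *v U 0 \<omega>))" for \<omega>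
  have f1e: "f1 \<omega> = \<sigma> (s1 (U 0 \<omega>, W 0 \<omega>)) * \<sigma> (s2 (U 0 \<omega>, W 0 \<omega>))" for \<omega>
    by (simp add: f1_def s1_def s2_def qx_def qx'_def)
  have f2e: "f2 \<omega> = deriv \<sigma> (s1 (U 0 \<omega>, W 0 \<omega>)) * deriv \<sigma> (s2 (U 0 \<omega>, W 0 \<omega>)) * aa (U 0 \<omega>, W 0 \<omega>)" for \<omega>
    by (simp add: f2_def s1_def s2_def aa_def qx_def qx'_def)
  have f3e: "f3 \<omega> = deriv \<sigma> (s1 (U 0 \<omega>, W 0 \<omega>)) * deriv \<sigma> (s2 (U 0 \<omega>, W 0 \<omega>)) * rr (U 0 \<omega>, W 0 \<omega>)" for \<omega>
    by (simp add: f3_def s1_def s2_def rr_def qx_def qx'_def)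
  have p0_meas[measurable]: "(\<lambda>\<omega>. (U 0 \<omega>, W 0 \<omega>)) \<in> borel_measurable M" by (rule UW_meas)
  have f1_int: "integrable M f1"
  proof (rule P.integrable_const_bound[where B="\<sigma>0 * \<sigma>0"])
    show "AE \<omega> in M. norm (f1 \<omega>) \<le> \<sigma>0 * \<sigma>0" by (intro AE_I2) (simp add: f1e ss_bd)
    show "f1 \<in> borel_measurable M" unfolding f1e[abs_def] by measurable
  qed
  have f2_int: "integrable M f2"
  proof (rule P.integrable_const_bound[where B="\<sigma>1 * \<sigma>1"])
    show "AE \<omega> in M. norm (f2 \<omega>) \<le> \<sigma>1 * \<sigma>1" by (intro AE_I2) (simp add: f2e t2_bd)
    show "f2 \<in> borel_measurable M" unfolding f2e[abs_def] by measurable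
  qed
  have f3_int: "integrable M f3"
  proof (rule Bochner_Integration.integrable_bound)
    show "integrable M (\<lambda>\<omega>. \<sigma>1 * \<sigma>1 * Bx * (norm (U 0 \<omega>))^2)" using N2_int by auto
    show "f3 \<in> borel_measurable M" unfolding f3e[abs_def] by measurable
    show "AE \<omega> in M. norm (f3 \<omega>) \<le> norm (\<sigma>1 * \<sigma>1 * Bx * (norm (U 0 \<omega>))^2)"
    proof (intro AE_I2)
      fix \<omega>
      have "\<bar>f3 \<omega>\<bar> \<le> \<sigma>1 * \<sigma>1 * Bx * (norm (U 0 \<omega>))^2" using t3_bd[of "(U 0 \<omega>, W 0 \<omega>)"] by (simp add: f3e)
      then show "norm (f3 \<omega>) \<le> norm (\<sigma>1 * \<sigma>1 * Bx * (norm (U 0 \<omega>))^2)" by simp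
    qed
  qed
  have Y0e: "Y 0 \<omega> = f1 \<omega> + f2 \<omega> + (q X \<bullet> q X') * f3 \<omega>" for \<omega>
    by (simp add: Y_def Gp_eq f1e f2e f3e qx_def qx'_def)
  have EY: "P.expectation (Y 0) = P.expectation f1 + P.expectation f2 + (q X \<bullet> q X') * P.expectation f3"
  proof -
    have "P.expectation (Y 0) = P.expectation (\<lambda>\<omega>. f1 \<omega> + f2 \<omega> + (q X \<bullet> q X') * f3 \<omega>)"
      by (rule arg_cong[where f=P.expectation]) (rule ext, rule Y0e)
    also have "\<dots> = P.expectation f1 + P.expectation f2 + (q X \<bullet> q X') * P.expectation f3"
      using f1_int f2_int f3_int by simp
    finally show ?thesis .
  qed
  have lim: "AE \<omega> in M. (\<lambda>n. (\<Sum>i<n. Y i \<omega>) / n) \<longlonglongrightarrow> P.expectation (Y 0)"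
    by (rule P.slln[where Y=Y, OF Y_meas Y_ind Y_distr Y_sq])
  have gk_c': "gk \<sigma> (q X) (q X') X X' (cc, u, w) = Gp (u, w)" if "cc^2 = 1" for cc u w
    using gk_c[OF that] by (simp add: qx_def qx'_def)
  from lim cAE show ?thesis
  proof (eventually_elim)
    case (elim \<omega>)
    have "ntk \<sigma> (2 * n) q X X' (sym_init (2 * n) (\<lambda>i. c i \<omega>) (\<lambda>i. U i \<omega>) (\<lambda>i. W i \<omega>)) = (\<Sum>i<n. Y i \<omega>) / n" for n
    proof -
      have "ntk \<sigma> (2 * n) q X X' (sym_init (2 * n) (\<lambda>i. c i \<omega>) (\<lambda>i. U i \<omega>) (\<lambda>i. W i \<omega>))
          = (\<Sum>i<n. gk \<sigma> (q X) (q X') X X' (c i \<omega>, U i \<omega>, W i \<omega>)) / n"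
        by (rule ntk_sym[OF \<sigma>_diff])
      also have "\<dots> = (\<Sum>i<n. Y i \<omega>) / n"
        using elim by (simp add: gk_c' Y_def)
      finally show ?thesis .
    qed
    then show ?case using elim EY unfolding f1_def f2_def f3_def by simp
  qed
qed

end
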